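(* Let $N=1$ and $p>1$. Then the equation $-u''=|u|^{p-1}u+M|u'|^{\frac{2p}{p+1}}$ admits a ground state $u$ if and only if $M\le-\mu^*(1)$. Such a ground state satisfies $u(r)\sim U_{2,M}(r)$ as $r\to\infty$. Furthermore, if $M<-\mu^*(1)$ there exists a positive singular solution $u$ on $(0,\infty)$ which satisfies $u(r)\sim U_{1,M}(r)$ as $r\to0$ and $u(r)\sim U_{2,M}(r)$ as $r\to\infty$.
   Context: A ground state is a nonnegative $u\in C^2([0,\infty))$ with $u'(0)=0$ solving $-u''=|u|^{p-1}u+M|u'|^{\frac{2p}{p+1}}$ on $(0,\infty)$. Let $\mu^*(1)=(p+1)\left(\frac{p+1}{2p}\right)^{\frac{p}{p+1}}$ and $K=-\frac{p+1}{p-1}$. For $M<-\mu^*(1)$ the equation $X^{p-1}+M\left(\frac{2}{p-1}\right)^{\frac{2p}{p+1}}X^{\frac{p-1}{p+1}}-\frac{2K}{p-1}=0$ has exactly two positive roots $X_{1,M}<X_{2,M}$, and for $M=-\mu^*(1)$ a unique positive root, denoted $X_{1,M}=X_{2,M}$. Set $U_{j,M}(r)=X_{j,M}r^{-\frac{2}{p-1}}$. $f\sim g$ means $f/g\to1$. *)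

theory Defs
  imports "HOL-Analysis.Analysis" "HOL-Library.Landau_Symbols"
begin

definition mu_star1 :: "real \<Rightarrow> real" where
  "mu_star1 p = (p + 1) * ((p + 1) / (2 * p)) powr (p / (p + 1))"

definition Kc :: "real \<Rightarrow> real" where
  "Kc p = - (p + 1) / (p - 1)"

definition Xeq :: "real \<Rightarrow> real \<Rightarrow> real \<Rightarrow> real" where
  "Xeq p M X = X powr (p - 1) + M * (2 / (p - 1)) powr (2 * p / (p + 1)) * X powr ((p - 1) / (p + 1))
               - 2 * Kc p / (p - 1)"

definition Xroots :: "real \<Rightarrow> real \<Rightarrow> real set" where
  "Xroots p M = {X. X > 0 \<and> Xeq p M X = 0}"

definition X1 :: "real \<Rightarrow> real \<Rightarrow> real" where
  "X1 p M = Inf (Xroots p M)"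

definition X2 :: "real \<Rightarrow> real \<Rightarrow> real" where
  "X2 p M = Sup (Xroots p M)"

definition U1 :: "real \<Rightarrow> real \<Rightarrow> real \<Rightarrow> real" where
  "U1 p M r = X1 p M * r powr (- 2 / (p - 1))"

definition U2 :: "real \<Rightarrow> real \<Rightarrow> real \<Rightarrow> real" where
  "U2 p M r = X2 p M * r powr (- 2 / (p - 1))"

definition ground_state :: "real \<Rightarrow> real \<Rightarrow> (real \<Rightarrow> real) \<Rightarrow> bool" where
  "ground_state p M u \<longleftrightarrow>
     (\<exists>u1 u2.
        (\<forall>r\<ge>0. (u has_real_derivative u1 r) (at r within {0..}) \<and>
                (u1 has_real_derivative u2 r) (at r within {0..})) \<and>
        continuous_on {0..} u2 \<and>
        u1 0 = 0 \<and>
        (\<forall>r\<ge>0. u r \<ge> 0) \<and>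
        (\<exists>r\<ge>0. u r \<noteq> 0) \<and>
        (\<forall>r>0. - u2 r = \<bar>u r\<bar> powr (p - 1) * u r + M * \<bar>u1 r\<bar> powr (2 * p / (p + 1))))"

definition pos_solution :: "real \<Rightarrow> real \<Rightarrow> (real \<Rightarrow> real) \<Rightarrow> bool" where
  "pos_solution p M u \<longleftrightarrow>
     (\<exists>u1 u2.
        (\<forall>r>0. (u has_real_derivative u1 r) (at r) \<and> (u1 has_real_derivative u2 r) (at r)) \<and>
        continuous_on {0<..} u2 \<and>
        (\<forall>r>0. u r > 0) \<and>
        (\<forall>r>0. - u2 r = \<bar>u r\<bar> powr (p - 1) * u r + M * \<bar>u1 r\<bar> powr (2 * p / (p + 1))))"

end

theory Submission
  imports Defs
begin

definition gg :: "real \<Rightarrow> real \<Rightarrow> real \<Rightarrow> real" where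
  "gg p M x = - M * (2 * x) powr (p / (p + 1)) - 1 - (p + 1) * x"

lemma tangent_powr:
  fixes t x s :: real
  assumes "0 < t" "t < 1" "x > 0" "s \<ge> 0"
  shows "s powr t \<le> x powr t + t * x powr (t - 1) * (s - x)"
proof (cases "s = 0")
  case True
  have "x powr (t-1) * x = x powr t" using assms by (simp add: powr_diff)
  then show ?thesis using True assms by (simp add: algebra_simps)
next
  case False
  then have sp: "s > 0" using assms by simp
  have "(s/x) powr t * 1 powr (1-t) \<le> t*(s/x) + (1-t)*1"
    by (rule Youngs_inequality_0) (use assms sp in auto)
  then have "(s/x) powr t \<le> t*(s/x) + (1-t)" by simp
  then have "x powr t * (s/x) powr t \<le> x powr t * (t*(s/x) + (1-t))"
    by (rule mult_left_mono) simp
  moreover have "x powr t * (s/x) powr t = s powr t" using assms sp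
    by (simp add: powr_divide)
  moreover have "x powr t * (t*(s/x) + (1-t)) = x powr t + t * x powr (t - 1) * (s - x)"
    using assms by (simp add: powr_diff field_simps)
  ultimately show ?thesis by simp
qed

lemma gg_split: "x \<ge> 0 \<Longrightarrow> gg p M x = - M * 2 powr (p/(p+1)) * x powr (p/(p+1)) - 1 - (p+1)*x"
  unfolding gg_def by (simp add: powr_mult)

lemma gg_zero: "p > 1 \<Longrightarrow> gg p M 0 = -1"
  unfolding gg_def by simp

lemma gg_tangent:
  assumes "p > 1" "M \<le> 0" "x > 0" "s \<ge> 0"
  shows "gg p M s \<le> gg p M x + (- M * 2 powr (p/(p+1)) * (p/(p+1)) * x powr (p/(p+1) - 1) - (p+1)) * (s - x)"
proof -
  define T where "T = p/(p+1)"
  define A where "A = - M * 2 powr T"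
  define B where "B = x powr (T - 1)"
  define Ts where "Ts = s powr T"
  define Tx where "Tx = x powr T"
  have t: "Ts \<le> Tx + T * B * (s - x)"
    unfolding Ts_def Tx_def B_def T_def by (rule tangent_powr) (use assms in auto)
  have A0: "A \<ge> 0" unfolding A_def using assms by (simp add: mult_nonpos_nonneg)
  have i: "A * Ts \<le> A * (Tx + T * B * (s - x))"
    by (rule mult_left_mono[OF t A0])
  have e1: "gg p M s = A * Ts - 1 - (p+1) * s" and e2: "gg p M x = A * Tx - 1 - (p+1) * x"
    using assms unfolding A_def Ts_def Tx_def T_def by (simp_all add: gg_split)
  have e3: "A * Tx - 1 - (p+1) * x + (A * T * B - (p+1)) * (s - x) = A * (Tx + T * B * (s - x)) - 1 - (p+1) * s"
    by (simp add: algebra_simps)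
  show ?thesis using i e1 e2 e3 unfolding A_def B_def T_def by linarith
qed

lemma gg_chord:
  assumes "p > 1" "M \<le> 0" "a \<ge> 0" "b \<ge> 0" "0 \<le> l" "l \<le> 1"
  shows "(1-l) * gg p M a + l * gg p M b \<le> gg p M ((1-l)*a + l*b)"
proof (cases "(1-l)*a + l*b = 0")
  case True
  then have "(1-l)*a = 0" "l*b = 0" using assms by (smt (verit) mult_nonneg_nonneg)+
  then show ?thesis using True assms
    by (cases "l = 0"; cases "l = 1") (auto simp: gg_zero)
next
  case False
  define c where "c = (1-l)*a + l*b"
  have cpos: "c > 0" using False assms unfolding c_def by (smt (verit) mult_nonneg_nonneg)
  define K where "K = (- M * 2 powr (p/(p+1)) * (p/(p+1)) * c powr (p/(p+1) - 1) - (p+1))"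
  have ta: "gg p M a \<le> gg p M c + K * (a - c)" unfolding K_def by (rule gg_tangent) (use assms cpos in auto)
  have tb: "gg p M b \<le> gg p M c + K * (b - c)" unfolding K_def by (rule gg_tangent) (use assms cpos in auto)
  have "(1-l) * gg p M a + l * gg p M b \<le> (1-l) * (gg p M c + K * (a - c)) + l * (gg p M c + K * (b - c))"
    by (rule add_mono; rule mult_left_mono) (use ta tb assms in auto)
  also have "\<dots> = gg p M c" unfolding c_def by (simp add: algebra_simps)
  finally show ?thesis unfolding c_def .
qed

lemma gg_abs_cont: "p > 1 \<Longrightarrow> continuous_on UNIV (\<lambda>x. gg p M \<bar>x\<bar>)"
proof -
  assume p: "p > 1"
  have "continuous_on UNIV (\<lambda>x. (2 * \<bar>x\<bar>) powr (p/(p+1)))"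
    by (rule continuous_on_powr') (use p in \<open>auto intro!: continuous_intros\<close>)
  then show ?thesis unfolding gg_def
    by (intro continuous_on_diff continuous_on_mult continuous_on_const continuous_on_rabs continuous_on_id)
qed

lemma gg_cont: "p > 1 \<Longrightarrow> continuous_on {0..} (gg p M)"
  using continuous_on_subset[OF gg_abs_cont[of p M], of "{0..}"]
  by (rule continuous_on_eq) auto

lemma gg_isCont_sq: "p > 1 \<Longrightarrow> isCont (\<lambda>t. gg p M (t^2)) x"
proof -
  assume p: "p > 1"
  have "isCont (\<lambda>x. gg p M \<bar>x\<bar>) (x^2)" using gg_abs_cont[OF p]
    by (simp add: continuous_on_eq_continuous_at)
  then have "isCont (\<lambda>t. gg p M \<bar>t^2\<bar>) x"
    by (rule continuous_at_compose[of _ "\<lambda>t. t^2", unfolded o_def, rotated]) (intro continuous_intros)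
  then show ?thesis by simp
qed

lemma gg_large:
  assumes p: "p > 1"
  shows "\<exists>S0>0. \<forall>s\<ge>S0. gg p M s \<le> -1"
proof (cases "M \<ge> 0")
  case True
  show ?thesis
  proof (intro exI[of _ 1] conjI allI impI)
    fix s :: real assume "s \<ge> 1"
    moreover have "M * (2 * s) powr (p/(p+1)) \<ge> 0" using True by simp
    moreover have "(p+1) * s \<ge> 0" using p \<open>s \<ge> 1\<close> by simp
    ultimately show "gg p M s \<le> -1" unfolding gg_def by linarith
  qed simp
next
  case False
  define A where "A = - M * 2 powr (p/(p+1))"
  have A0: "A > 0" using False unfolding A_def by (simp add: mult_neg_pos)
  define S0 where "S0 = (A/(p+1)) powr (p+1)"
  have S0: "S0 > 0" using A0 p unfolding S0_def by simp
  show ?thesis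
  proof (intro exI[of _ S0] conjI allI impI S0)
    fix s :: real assume s: "s \<ge> S0"
    then have sp: "s > 0" using S0 by simp
    have "S0 powr (1/(p+1)) \<le> s powr (1/(p+1))"
      by (rule powr_mono2) (use s S0 p in auto)
    moreover have "S0 powr (1/(p+1)) = A/(p+1)" unfolding S0_def using A0 p
      by (simp add: powr_powr)
    ultimately have h: "A/(p+1) \<le> s powr (1/(p+1))" by simp
    have "p/(p+1) + 1/(p+1) = 1" using p by (simp add: add_divide_distrib[symmetric])
    then have sp2: "s powr (p/(p+1)) * s powr (1/(p+1)) = s"
      using sp by (simp flip: powr_add)
    have "A * s powr (p/(p+1)) \<le> (p+1) * s"
    proof -
      have "A * s powr (p/(p+1)) = (A/(p+1)) * s powr (p/(p+1)) * (p+1)" using p by simp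
      also have "\<dots> \<le> s powr (1/(p+1)) * s powr (p/(p+1)) * (p+1)"
        using h p by (intro mult_right_mono) auto
      also have "\<dots> = (p+1) * s" using sp2 by (simp add: algebra_simps)
      finally show ?thesis .
    qed
    then show "gg p M s \<le> -1" using sp by (simp add: gg_split A_def)
  qed
qed


definition kk :: "real \<Rightarrow> real \<Rightarrow> real" where
  "kk p M = - M * p * 2 powr (p/(p+1)) / (p+1)^2"

definition xmax :: "real \<Rightarrow> real \<Rightarrow> real" where
  "xmax p M = kk p M powr (p+1)"

lemma xmax_pos: "p > 1 \<Longrightarrow> M < 0 \<Longrightarrow> xmax p M > 0"
  unfolding xmax_def kk_def by (simp add: mult_neg_pos)

lemma gg_max:
  assumes p: "p > 1" and M: "M < 0" and s: "s \<ge> 0"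
  shows "gg p M s \<le> gg p M (xmax p M)"
    and "gg p M (xmax p M) = (p+1)/p * xmax p M - 1"
proof -
  define T2 where "T2 = 2 powr (p/(p+1))"
  have T2: "T2 > 0" unfolding T2_def by simp
  define k where "k = kk p M"
  have k0: "k > 0" unfolding k_def kk_def using p M by (intro divide_pos_pos mult_pos_pos) auto
  have A: "- M * T2 = k * (p+1)^2 / p" unfolding k_def kk_def T2_def using p by (simp add: field_simps)
  have xm: "xmax p M = k powr (p+1)" unfolding xmax_def k_def ..
  have e1: "xmax p M powr (p/(p+1) - 1) = 1/k"
  proof -
    have "(p+1) * (p/(p+1) - 1) = -1" using p by (simp add: field_simps)
    then show ?thesis unfolding xm using k0 by (simp add: powr_powr powr_minus divide_inverse)
  qed
  have "- M * T2 * (p/(p+1)) * xmax p M powr (p/(p+1) - 1) = (k * (p+1)^2 / p) * (p/(p+1)) * (1/k)"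
    unfolding e1 A ..
  also have "\<dots> = (k/k) * (p/p) * ((p+1)*(p+1)/(p+1))" by (simp add: power2_eq_square)
  also have "\<dots> = p + 1" using k0 p by simp
  finally have coef: "- M * 2 powr (p/(p+1)) * (p/(p+1)) * xmax p M powr (p/(p+1) - 1) - (p+1) = 0"
    unfolding T2_def by simp
  show "gg p M s \<le> gg p M (xmax p M)"
  proof -
    have "gg p M s \<le> gg p M (xmax p M) + (- M * 2 powr (p/(p+1)) * (p/(p+1)) * xmax p M powr (p/(p+1) - 1) - (p+1)) * (s - xmax p M)"
      by (rule gg_tangent[OF p less_imp_le[OF M] xmax_pos[OF p M] s])
    then show ?thesis unfolding coef by simp
  qed
  have pp: "(p+1)*(p/(p+1)) = p" using p by simp
  have e2: "xmax p M powr (p/(p+1)) = k powr p"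
    unfolding xm powr_powr pp ..
  have e3: "k * k powr p = k powr (p+1)" using k0 by (simp add: powr_add)
  have "gg p M (xmax p M) = (- M * T2) * k powr p - 1 - (p+1) * k powr (p+1)"
    unfolding gg_split[OF less_imp_le[OF xmax_pos[OF p M]]] e2 T2_def by (simp add: xm)
  also have "\<dots> = (p+1)^2/p * (k * k powr p) - 1 - (p+1) * k powr (p+1)" unfolding A by simp
  also have "\<dots> = (p+1)/p * xmax p M - 1" unfolding e3 xm using p by (simp add: field_simps power2_eq_square)
  finally show "gg p M (xmax p M) = (p+1)/p * xmax p M - 1" .
qed

lemma mu_star1_alt:
  assumes p: "p > 1"
  shows "mu_star1 p = (p/(p+1)) powr (1/(p+1)) * ((p+1)^2 / (p * 2 powr (p/(p+1))))"
proof -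
  define T2 where "T2 = 2 powr (p/(p+1))"
  have T2: "T2 > 0" unfolding T2_def by simp
  define P1 where "P1 = p powr (1/(p+1))"
  define Pt where "Pt = p powr (p/(p+1))"
  define Q1 where "Q1 = (p+1) powr (1/(p+1))"
  define Qt where "Qt = (p+1) powr (p/(p+1))"
  have e: "1/(p+1) + p/(p+1) = 1" using p by (simp add: add_divide_distrib[symmetric])
  have P: "P1 * Pt = p" unfolding P1_def Pt_def using p e
    by (simp flip: powr_add)
  have Q: "Q1 * Qt = p + 1" unfolding Q1_def Qt_def using p e
    by (simp flip: powr_add)
  have pos: "P1 > 0" "Pt > 0" "Q1 > 0" "Qt > 0"
    unfolding P1_def Pt_def Q1_def Qt_def using p by auto
  have "mu_star1 p = (p+1) * (Qt / (T2 * Pt))"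
    unfolding mu_star1_def Qt_def Pt_def T2_def using p by (simp add: powr_divide powr_mult)
  also have "\<dots> = (Q1*Qt) * (Qt / (T2 * Pt))" using Q by simp
  also have "\<dots> = (P1/Q1) * ((Q1*Qt)^2 / ((P1*Pt) * T2))"
    using pos T2 by (simp add: field_simps power2_eq_square)
  also have "\<dots> = (P1/Q1) * ((p+1)^2 / (p * T2))" using P Q by simp
  also have "P1/Q1 = (p/(p+1)) powr (1/(p+1))" unfolding P1_def Q1_def using p by (simp add: powr_divide)
  finally show ?thesis unfolding T2_def .
qed

lemma mu_star1_pos: "p > 1 \<Longrightarrow> mu_star1 p > 0"
  unfolding mu_star1_def by simp

lemma gg_xmax_sign:
  assumes p: "p > 1" and M: "M < 0"
  shows "gg p M (xmax p M) < 0 \<longleftrightarrow> - M < mu_star1 p"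
    and "gg p M (xmax p M) \<le> 0 \<longleftrightarrow> - M \<le> mu_star1 p"
proof -
  define k where "k = kk p M"
  define c where "c = (p/(p+1)) powr (1/(p+1))"
  define F where "F = (p+1)^2 / (p * 2 powr (p/(p+1)))"
  have F: "F > 0" unfolding F_def using p by simp
  have k0: "k > 0" unfolding k_def kk_def using p M by (intro divide_pos_pos mult_pos_pos) auto
  have c0: "c > 0" unfolding c_def using p by simp
  have cc: "c powr (p+1) = p/(p+1)" unfolding c_def using p by (simp add: powr_powr)
  have kM: "- M = k * F" unfolding k_def kk_def F_def using p by (simp add: field_simps)
  have mu: "mu_star1 p = c * F" unfolding c_def F_def by (rule mu_star1_alt[OF p])
  have i1: "-M < mu_star1 p \<longleftrightarrow> k < c" unfolding kM mu using F by simp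
  have i2: "-M \<le> mu_star1 p \<longleftrightarrow> k \<le> c" unfolding kM mu using F by simp
  have g: "gg p M (xmax p M) = (p+1)/p * k powr (p+1) - 1" using gg_max(2)[OF p M order.refl] unfolding xmax_def k_def .
  have j1: "k < c \<longleftrightarrow> k powr (p+1) < c powr (p+1)" using k0 c0 p
    by (auto intro: powr_less_mono2 powr_less_cancel2[of "p+1"])
  have j2: "k \<le> c \<longleftrightarrow> k powr (p+1) \<le> c powr (p+1)"
  proof
    assume "k \<le> c" then show "k powr (p+1) \<le> c powr (p+1)" using k0 p by (intro powr_mono2) auto
  next
    assume h: "k powr (p+1) \<le> c powr (p+1)"
    show "k \<le> c"
    proof (rule ccontr)
      assume "\<not> k \<le> c"
      then have "c powr (p+1) < k powr (p+1)" using c0 p by (intro powr_less_mono2) auto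
      then show False using h by simp
    qed
  qed
  show "gg p M (xmax p M) < 0 \<longleftrightarrow> - M < mu_star1 p"
    unfolding g i1 j1 cc using p by (simp add: field_simps)
  show "gg p M (xmax p M) \<le> 0 \<longleftrightarrow> - M \<le> mu_star1 p"
    unfolding g i2 j2 cc using p by (simp add: field_simps)
qed


definition s1 :: "real \<Rightarrow> real \<Rightarrow> real" where
  "s1 p M = Inf ({0..xmax p M} \<inter> gg p M -` {0..})"

definition s2 :: "real \<Rightarrow> real \<Rightarrow> real" where
  "s2 p M = Sup ({xmax p M..} \<inter> gg p M -` {0..})"

lemma gg_xmax_nonneg:
  assumes p: "p > 1" and M: "M \<le> - mu_star1 p"
  shows "M < 0" "gg p M (xmax p M) \<ge> 0"
proof -
  show M0: "M < 0" using M mu_star1_pos[OF p] by linarith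
  show "gg p M (xmax p M) \<ge> 0" using gg_xmax_sign(1)[OF p M0] M by linarith
qed

lemma s1_props:
  assumes p: "p > 1" and M: "M \<le> - mu_star1 p"
  shows "0 < s1 p M" "s1 p M \<le> xmax p M" "gg p M (s1 p M) = 0"
    "\<And>s. 0 \<le> s \<Longrightarrow> s < s1 p M \<Longrightarrow> gg p M s < 0"
    "\<And>s. 0 \<le> s \<Longrightarrow> s \<le> xmax p M \<Longrightarrow> gg p M s \<ge> 0 \<Longrightarrow> s1 p M \<le> s"
proof -
  note M0 = gg_xmax_nonneg(1)[OF p M]
  define A where "A = {0..xmax p M} \<inter> gg p M -` {0..}"
  have xm: "xmax p M \<in> A" unfolding A_def using gg_xmax_nonneg(2)[OF p M] xmax_pos[OF p M0] by auto
  have cl: "closed A" unfolding A_def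
    by (rule continuous_closed_preimage) (auto intro: continuous_on_subset[OF gg_cont[OF p]])
  have bdd: "bdd_below A" unfolding A_def by (auto intro: bdd_belowI[of _ 0])
  have inA: "s1 p M \<in> A" unfolding s1_def A_def[symmetric]
    using closed_contains_Inf[OF _ bdd cl] xm by auto
  have low: "\<And>s. s \<in> A \<Longrightarrow> s1 p M \<le> s" unfolding s1_def A_def[symmetric]
    by (rule cInf_lower[OF _ bdd])
  show "\<And>s. 0 \<le> s \<Longrightarrow> s \<le> xmax p M \<Longrightarrow> gg p M s \<ge> 0 \<Longrightarrow> s1 p M \<le> s"
    using low unfolding A_def by auto
  show "s1 p M \<le> xmax p M" using inA unfolding A_def by auto
  have g1: "gg p M (s1 p M) \<ge> 0" using inA unfolding A_def by auto
  have nn: "s1 p M \<ge> 0" using inA unfolding A_def by auto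
  show pos: "0 < s1 p M"
  proof (rule ccontr)
    assume "\<not> 0 < s1 p M"
    then have "s1 p M = 0" using nn by simp
    then show False using g1 gg_zero[OF p, of M] by simp
  qed
  show lt: "\<And>s. 0 \<le> s \<Longrightarrow> s < s1 p M \<Longrightarrow> gg p M s < 0"
  proof -
    fix s assume s: "0 \<le> s" "s < s1 p M"
    show "gg p M s < 0"
    proof (rule ccontr)
      assume "\<not> gg p M s < 0"
      then have "s \<in> A" unfolding A_def using s \<open>s1 p M \<le> xmax p M\<close> by auto
      then show False using low s by fastforce
    qed
  qed
  show "gg p M (s1 p M) = 0"
  proof (rule ccontr)
    assume "gg p M (s1 p M) \<noteq> 0"
    then have gpos: "gg p M (s1 p M) > 0" using g1 by simp
    obtain t where t: "0 \<le> t" "t \<le> s1 p M" "gg p M t = 0"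
      using IVT'[of "gg p M" 0 0 "s1 p M"] gpos gg_zero[OF p, of M] nn
        continuous_on_subset[OF gg_cont[OF p], of "{0..s1 p M}"] by auto
    then have "t < s1 p M" using gpos by (cases "t = s1 p M") auto
    then show False using lt[of t] t by simp
  qed
qed

lemma s2_props:
  assumes p: "p > 1" and M: "M \<le> - mu_star1 p"
  shows "xmax p M \<le> s2 p M" "gg p M (s2 p M) = 0"
    "\<And>s. s > s2 p M \<Longrightarrow> gg p M s < 0"
proof -
  note M0 = gg_xmax_nonneg(1)[OF p M]
  define B where "B = {xmax p M..} \<inter> gg p M -` {0..}"
  have xm: "xmax p M \<in> B" unfolding B_def using gg_xmax_nonneg(2)[OF p M] by auto
  have xpos: "xmax p M > 0" by (rule xmax_pos[OF p M0])
  have cl: "closed B" unfolding B_def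
    by (rule continuous_closed_preimage) (use xpos in \<open>auto intro: continuous_on_subset[OF gg_cont[OF p]]\<close>)
  obtain S0 where S0: "S0 > 0" "\<And>s. s \<ge> S0 \<Longrightarrow> gg p M s \<le> -1" using gg_large[OF p, of M] by auto
  have bdd: "bdd_above B" unfolding B_def
  proof (rule bdd_aboveI[of _ S0])
    fix x assume "x \<in> {xmax p M..} \<inter> gg p M -` {0..}"
    then show "x \<le> S0" using S0(2)[of x] by (cases "x \<ge> S0") auto
  qed
  have inB: "s2 p M \<in> B" unfolding s2_def B_def[symmetric]
    using closed_contains_Sup[OF _ bdd cl] xm by auto
  have up: "\<And>s. s \<in> B \<Longrightarrow> s \<le> s2 p M" unfolding s2_def B_def[symmetric]
    by (rule cSup_upper[OF _ bdd])
  show "xmax p M \<le> s2 p M" using inB unfolding B_def by auto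
  have g2: "gg p M (s2 p M) \<ge> 0" using inB unfolding B_def by auto
  show gt: "\<And>s. s > s2 p M \<Longrightarrow> gg p M s < 0"
  proof -
    fix s assume s: "s > s2 p M"
    show "gg p M s < 0"
    proof (rule ccontr)
      assume "\<not> gg p M s < 0"
      then have "s \<in> B" unfolding B_def using s \<open>xmax p M \<le> s2 p M\<close> by auto
      then show False using up s by fastforce
    qed
  qed
  show "gg p M (s2 p M) = 0"
  proof (rule ccontr)
    assume "gg p M (s2 p M) \<noteq> 0"
    then have gpos: "gg p M (s2 p M) > 0" using g2 by simp
    define b where "b = max (s2 p M) S0 + 1"
    have b: "b > s2 p M" "gg p M b \<le> -1" using S0(2)[of b] unfolding b_def by auto
    have nn: "s2 p M \<ge> 0" using \<open>xmax p M \<le> s2 p M\<close> xpos by simp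
    obtain t where t: "s2 p M \<le> t" "t \<le> b" "gg p M t = 0"
      using IVT2'[of "gg p M" b 0 "s2 p M"] gpos b nn
        continuous_on_subset[OF gg_cont[OF p], of "{s2 p M..b}"] by auto
    then have "t > s2 p M" using gpos by (cases "t = s2 p M") auto
    then show False using gt[of t] t by simp
  qed
qed

lemma gg_zero_between:
  assumes p: "p > 1" and M: "M \<le> - mu_star1 p" and s: "s \<ge> 0" "gg p M s = 0"
  shows "s1 p M \<le> s" "s \<le> s2 p M"
proof -
  show "s \<le> s2 p M" using s2_props(3)[OF p M, of s] s by force
  show "s1 p M \<le> s"
  proof (cases "s \<le> xmax p M")
    case True then show ?thesis using s1_props(5)[OF p M s(1)] s by simp
  next
    case False then show ?thesis using s1_props(2)[OF p M] by simp
  qed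
qed

lemma gg_chord_low:
  assumes p: "p > 1" and M: "M \<le> - mu_star1 p" and s: "0 \<le> s" "s \<le> s1 p M"
  shows "gg p M s \<ge> s / s1 p M - 1"
proof -
  note M0 = gg_xmax_nonneg(1)[OF p M]
  have s1p: "s1 p M > 0" by (rule s1_props(1)[OF p M])
  define l where "l = s / s1 p M"
  have l: "0 \<le> l" "l \<le> 1" unfolding l_def using s s1p by auto
  have "(1-l) * gg p M 0 + l * gg p M (s1 p M) \<le> gg p M ((1-l)*0 + l * s1 p M)"
    by (rule gg_chord) (use p M0 l s1p in auto)
  moreover have "l * s1 p M = s" unfolding l_def using s1p by simp
  ultimately show ?thesis using s1_props(3)[OF p M] gg_zero[OF p, of M] unfolding l_def by simp
qed

lemma gg_pos_between:
  assumes p: "p > 1" and M: "M < - mu_star1 p"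
  shows "s1 p M < xmax p M" "xmax p M < s2 p M"
    "\<And>s. s1 p M < s \<Longrightarrow> s < s2 p M \<Longrightarrow> gg p M s > 0"
proof -
  have Mle: "M \<le> - mu_star1 p" using M by simp
  note M0 = gg_xmax_nonneg(1)[OF p Mle]
  have gx: "gg p M (xmax p M) > 0" using gg_xmax_sign(2)[OF p M0] M by linarith
  show a1: "s1 p M < xmax p M" using s1_props(2,3)[OF p Mle] gx by (cases "s1 p M = xmax p M") auto
  show a2: "xmax p M < s2 p M" using s2_props(1,2)[OF p Mle] gx by (cases "s2 p M = xmax p M") auto
  have s1p: "s1 p M > 0" by (rule s1_props(1)[OF p Mle])
  fix s assume s: "s1 p M < s" "s < s2 p M"
  show "gg p M s > 0"
  proof (cases "s \<le> xmax p M")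
    case True
    define l where "l = (s - s1 p M) / (xmax p M - s1 p M)"
    have l: "0 < l" "l \<le> 1" unfolding l_def using s True a1 by auto
    have "(1-l) * gg p M (s1 p M) + l * gg p M (xmax p M) \<le> gg p M ((1-l) * s1 p M + l * xmax p M)"
      by (rule gg_chord) (use p M0 l s1p a1 in auto)
    moreover have "(1-l) * s1 p M + l * xmax p M = s1 p M + l * (xmax p M - s1 p M)" by (simp add: algebra_simps)
    moreover have "l * (xmax p M - s1 p M) = s - s1 p M" unfolding l_def using a1 by simp
    ultimately have "l * gg p M (xmax p M) \<le> gg p M s" using s1_props(3)[OF p Mle] by simp
    moreover have "l * gg p M (xmax p M) > 0" using l gx by simp
    ultimately show ?thesis by simp
  next
    case False
    define l where "l = (s2 p M - s) / (s2 p M - xmax p M)"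
    have l: "0 < l" "l \<le> 1" unfolding l_def using s False a2 by auto
    have "(1-l) * gg p M (s2 p M) + l * gg p M (xmax p M) \<le> gg p M ((1-l) * s2 p M + l * xmax p M)"
      by (rule gg_chord) (use p M0 l s1p a1 a2 in auto)
    moreover have "(1-l) * s2 p M + l * xmax p M = s2 p M - l * (s2 p M - xmax p M)" by (simp add: algebra_simps)
    moreover have "l * (s2 p M - xmax p M) = s2 p M - s" unfolding l_def using a2 by simp
    ultimately have "l * gg p M (xmax p M) \<le> gg p M s" using s2_props(2)[OF p Mle] by simp
    moreover have "l * gg p M (xmax p M) > 0" using l gx by simp
    ultimately show ?thesis by simp
  qed
qed

lemma gg_upper_s1:
  assumes p: "p > 1" and M: "M \<le> - mu_star1 p"
  obtains L where "L > 0" "\<And>s. s1 p M \<le> s \<Longrightarrow> gg p M s \<le> L * (s - s1 p M)"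
proof -
  note M0 = gg_xmax_nonneg(1)[OF p M]
  have s1p: "s1 p M > 0" by (rule s1_props(1)[OF p M])
  define K where "K = - M * 2 powr (p/(p+1)) * (p/(p+1)) * s1 p M powr (p/(p+1) - 1) - (p+1)"
  show ?thesis
  proof (rule that[of "max K 1"])
    fix s assume s: "s1 p M \<le> s"
    have "gg p M s \<le> gg p M (s1 p M) + K * (s - s1 p M)" unfolding K_def
      by (rule gg_tangent) (use p M0 s1p s in auto)
    also have "\<dots> \<le> max K 1 * (s - s1 p M)" using s s1_props(3)[OF p M]
      by (simp add: mult_right_mono)
    finally show "gg p M s \<le> max K 1 * (s - s1 p M)" .
  qed simp
qed

lemma gg_upper_s2:
  assumes p: "p > 1" and M: "M \<le> - mu_star1 p"
  obtains L where "L > 0" "\<And>s. 0 \<le> s \<Longrightarrow> s \<le> s2 p M \<Longrightarrow> gg p M s \<le> L * (s2 p M - s)"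
proof -
  note M0 = gg_xmax_nonneg(1)[OF p M]
  have s2p: "s2 p M > 0" using s2_props(1)[OF p M] xmax_pos[OF p M0] by simp
  define K where "K = - M * 2 powr (p/(p+1)) * (p/(p+1)) * s2 p M powr (p/(p+1) - 1) - (p+1)"
  show ?thesis
  proof (rule that[of "max (-K) 1"])
    fix s assume s: "0 \<le> s" "s \<le> s2 p M"
    have "gg p M s \<le> gg p M (s2 p M) + K * (s - s2 p M)" unfolding K_def
      by (rule gg_tangent) (use p M0 s2p s in auto)
    also have "\<dots> = (-K) * (s2 p M - s)" using s2_props(2)[OF p M] by (simp add: algebra_simps)
    also have "\<dots> \<le> max (-K) 1 * (s2 p M - s)"
      by (rule mult_right_mono) (use s in auto)
    finally show "gg p M s \<le> max (-K) 1 * (s2 p M - s)" .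
  qed simp
qed


definition aa :: "real \<Rightarrow> real" where "aa p = 2/(p-1)"
definition Phi :: "real \<Rightarrow> real \<Rightarrow> real" where "Phi p y = (sqrt (2 * y) / aa p) powr (- aa p)"
definition Psi :: "real \<Rightarrow> real \<Rightarrow> real" where "Psi p X = (aa p)^2 * X powr (1-p) / 2"

lemma aa_pos: "p > 1 \<Longrightarrow> aa p > 0" unfolding aa_def by simp

lemma Psi_pos: "p > 1 \<Longrightarrow> X > 0 \<Longrightarrow> Psi p X > 0"
  unfolding Psi_def using aa_pos[of p] by simp

lemma Phi_pos: "p > 1 \<Longrightarrow> s > 0 \<Longrightarrow> Phi p s > 0"
  unfolding Phi_def using aa_pos[of p] by simp

lemma Phi_Psi:
  assumes p: "p > 1" and X: "X > 0"
  shows "Phi p (Psi p X) = X"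
proof -
  define a where "a = aa p"
  have a: "a > 0" unfolding a_def using aa_pos[OF p] .
  have "sqrt (2 * Psi p X) = sqrt (a^2 * X powr (1-p))" unfolding Psi_def a_def by simp
  also have "\<dots> = a * sqrt (X powr (1-p))" using a by (simp add: real_sqrt_mult)
  also have "sqrt (X powr (1-p)) = (X powr (1-p)) powr (1/2)" using X by (simp add: powr_half_sqrt)
  also have "\<dots> = X powr ((1-p)/2)" by (simp add: powr_powr)
  finally have "sqrt (2 * Psi p X) / a = X powr ((1-p)/2)" using a by simp
  then have "Phi p (Psi p X) = (X powr ((1-p)/2)) powr (-a)" unfolding Phi_def a_def by simp
  also have "\<dots> = X powr ((1-p)/2 * (-a))" by (simp add: powr_powr)
  also have "(1-p)/2 * (-a) = 1" unfolding a_def aa_def using p by (simp add: field_simps)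
  finally show ?thesis using X by simp
qed

lemma Psi_Phi:
  assumes p: "p > 1" and s: "s > 0"
  shows "Psi p (Phi p s) = s"
proof -
  define a where "a = aa p"
  have a: "a > 0" unfolding a_def using aa_pos[OF p] .
  define c where "c = sqrt (2 * s) / a"
  have c: "c > 0" unfolding c_def using a s by simp
  have "Phi p s powr (1-p) = (c powr (-a)) powr (1-p)" unfolding Phi_def c_def a_def ..
  also have "\<dots> = c powr (-a * (1-p))" by (simp add: powr_powr)
  also have "-a * (1-p) = 2" unfolding a_def aa_def using p by (simp add: field_simps)
  also have "c powr 2 = c^2" using c by (simp add: powr_numeral)
  also have "c^2 = 2 * s / a^2" unfolding c_def using s by (simp add: power_divide)
  finally show ?thesis unfolding Psi_def a_def[symmetric] using a by simp
qed

lemma Phi_antimono: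
  assumes p: "p > 1" and st: "0 < s" "s \<le> t"
  shows "Phi p t \<le> Phi p s"
  unfolding Phi_def
  by (rule powr_mono2') (use aa_pos[OF p] st in \<open>auto intro: divide_right_mono\<close>)

lemma Xeq_gg:
  assumes p: "p > 1" and X: "X > 0"
  shows "Xeq p M X = - (X powr (p-1) * gg p M (Psi p X))"
proof -
  define a where "a = aa p"
  have a: "a > 0" unfolding a_def using aa_pos[OF p] .
  define t where "t = p/(p+1)"
  have Y: "Psi p X = a^2/2 * X powr (1-p)" unfolding Psi_def a_def by simp
  have Ypos: "Psi p X > 0" using Psi_pos[OF p X] .
  have "(2 * Psi p X) powr t = (a^2 * X powr (1-p)) powr t" unfolding Y by simp
  also have "\<dots> = (a^2) powr t * X powr ((1-p)*t)" using a X by (simp add: powr_mult powr_powr)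
  also have "(a^2) powr t = a powr (2*p/(p+1))"
  proof -
    have "a^2 = a powr 2" using a by simp
    then have "(a^2) powr t = a powr (2 * t)" by (simp add: powr_powr)
    then show ?thesis unfolding t_def by simp
  qed
  finally have e1: "(2 * Psi p X) powr t = a powr (2*p/(p+1)) * X powr ((1-p)*t)" .
  have e2: "X powr (p-1) * X powr ((1-p)*t) = X powr ((p-1)/(p+1))"
  proof -
    have "(p-1) + (1-p)*t = (p-1)/(p+1)" unfolding t_def using p by (simp add: field_simps)
    then show ?thesis using X by (simp flip: powr_add)
  qed
  have e3: "X powr (p-1) * X powr (1-p) = 1"
    using X by (simp flip: powr_add)
  have gen: "\<And>x y::real. x \<noteq> 0 \<Longrightarrow> y * ((2/x)^2/2) = - 2 * (- y / x) / x"
    by (simp add: field_simps power2_eq_square)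
  have e4: "(p+1) * (a^2/2) = - 2 * Kc p / (p-1)"
    unfolding a_def aa_def Kc_def by (rule gen) (use p in simp)
  have gg: "gg p M (Psi p X) = - M * (a powr (2*p/(p+1)) * X powr ((1-p)*t)) - 1 - (p+1) * (a^2/2 * X powr (1-p))"
    unfolding gg_def t_def[symmetric] e1[symmetric] Y ..
  have "- (X powr (p-1) * gg p M (Psi p X)) = M * a powr (2*p/(p+1)) * (X powr (p-1) * X powr ((1-p)*t)) + X powr (p-1) + (p+1) * (a^2/2) * (X powr (p-1) * X powr (1-p))"
    unfolding gg by (simp add: algebra_simps)
  also have "\<dots> = X powr (p-1) + M * a powr (2*p/(p+1)) * X powr ((p-1)/(p+1)) - 2 * Kc p / (p-1)"
    unfolding e2 e3 e4 by simp
  finally show ?thesis unfolding Xeq_def a_def aa_def by simp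
qed

lemma Xroots_char:
  assumes p: "p > 1"
  shows "X \<in> Xroots p M \<longleftrightarrow> X > 0 \<and> gg p M (Psi p X) = 0"
  unfolding Xroots_def using Xeq_gg[OF p, of X M] by auto


lemma X2_eq:
  assumes p: "p > 1" and M: "M \<le> - mu_star1 p"
  shows "X2 p M = Phi p (s1 p M)"
  unfolding X2_def
proof (rule cSup_eq_maximum)
  have s1p: "s1 p M > 0" by (rule s1_props(1)[OF p M])
  show "Phi p (s1 p M) \<in> Xroots p M"
    unfolding Xroots_char[OF p] using Phi_pos[OF p s1p] Psi_Phi[OF p s1p] s1_props(3)[OF p M] by simp
  fix X assume "X \<in> Xroots p M"
  then have X: "X > 0" "gg p M (Psi p X) = 0" unfolding Xroots_char[OF p] by auto
  have "s1 p M \<le> Psi p X" using gg_zero_between(1)[OF p M _ X(2)] Psi_pos[OF p X(1)] by simp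
  then have "Phi p (Psi p X) \<le> Phi p (s1 p M)" by (rule Phi_antimono[OF p s1p])
  then show "X \<le> Phi p (s1 p M)" using Phi_Psi[OF p X(1)] by simp
qed

lemma X1_eq:
  assumes p: "p > 1" and M: "M \<le> - mu_star1 p"
  shows "X1 p M = Phi p (s2 p M)"
  unfolding X1_def
proof (rule cInf_eq_minimum)
  note M0 = gg_xmax_nonneg(1)[OF p M]
  have s2p: "s2 p M > 0" using s2_props(1)[OF p M] xmax_pos[OF p M0] by simp
  show "Phi p (s2 p M) \<in> Xroots p M"
    unfolding Xroots_char[OF p] using Phi_pos[OF p s2p] Psi_Phi[OF p s2p] s2_props(2)[OF p M] by simp
  fix X assume "X \<in> Xroots p M"
  then have X: "X > 0" "gg p M (Psi p X) = 0" unfolding Xroots_char[OF p] by auto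
  have "Psi p X \<le> s2 p M" using gg_zero_between(2)[OF p M _ X(2)] Psi_pos[OF p X(1)] by simp
  then have "Phi p (s2 p M) \<le> Phi p (Psi p X)" by (rule Phi_antimono[OF p Psi_pos[OF p X(1)]])
  then show "Phi p (s2 p M) \<le> X" using Phi_Psi[OF p X(1)] by simp
qed


lemma gronwall_fwd:
  fixes E E' :: "real \<Rightarrow> real"
  assumes ab: "a \<le> b" and C: "C \<ge> 0"
    and cont: "continuous_on {a..b} E"
    and der: "\<And>t. a < t \<Longrightarrow> t < b \<Longrightarrow> (E has_real_derivative E' t) (at t)"
    and bnd: "\<And>t. a < t \<Longrightarrow> t < b \<Longrightarrow> E' t \<le> C * E t"
    and Ea: "E a = 0" and nn: "\<And>t. a \<le> t \<Longrightarrow> t \<le> b \<Longrightarrow> E t \<ge> 0"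
  shows "E b = 0"
proof -
  define F where "F t = E t * exp (- C * t)" for t
  have "F b \<le> F a"
  proof (rule DERIV_nonpos_imp_decreasing_open[OF ab])
    fix t assume t: "a < t" "t < b"
    have "(F has_real_derivative (E' t * exp (- C * t) + E t * (exp (- C * t) * (- C)))) (at t)"
      unfolding F_def by (auto intro!: derivative_eq_intros der t)
    moreover have "E' t * exp (- C * t) + E t * (exp (- C * t) * (- C)) = (E' t - C * E t) * exp (- C * t)"
      by (simp add: algebra_simps)
    moreover have "(E' t - C * E t) * exp (- C * t) \<le> 0"
      using bnd[OF t] by (simp add: mult_nonpos_nonneg)
    ultimately show "\<exists>y. (F has_real_derivative y) (at t) \<and> y \<le> 0" by auto
  next
    show "continuous_on {a..b} F" unfolding F_def by (intro continuous_intros cont)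
  qed
  then have "E b * exp (- C * b) \<le> 0" unfolding F_def using Ea by simp
  then have "E b \<le> 0" by (simp add: mult_le_0_iff)
  then show ?thesis using nn[of b] ab by simp
qed

lemma gronwall_bwd:
  fixes E E' :: "real \<Rightarrow> real"
  assumes ab: "a \<le> b" and C: "C \<ge> 0"
    and cont: "continuous_on {a..b} E"
    and der: "\<And>t. a < t \<Longrightarrow> t < b \<Longrightarrow> (E has_real_derivative E' t) (at t)"
    and bnd: "\<And>t. a < t \<Longrightarrow> t < b \<Longrightarrow> - E' t \<le> C * E t"
    and Eb: "E b = 0" and nn: "\<And>t. a \<le> t \<Longrightarrow> t \<le> b \<Longrightarrow> E t \<ge> 0"
  shows "E a = 0"
proof -
  define F where "F t = E t * exp (C * t)" for t
  have "F a \<le> F b"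
  proof (rule DERIV_nonneg_imp_increasing_open[OF ab])
    fix t assume t: "a < t" "t < b"
    have "(F has_real_derivative (E' t * exp (C * t) + E t * (exp (C * t) * C))) (at t)"
      unfolding F_def by (auto intro!: derivative_eq_intros der t)
    moreover have "E' t * exp (C * t) + E t * (exp (C * t) * C) = (E' t + C * E t) * exp (C * t)"
      by (simp add: algebra_simps)
    moreover have "(E' t + C * E t) * exp (C * t) \<ge> 0"
      using bnd[OF t] by simp
    ultimately show "\<exists>y. (F has_real_derivative y) (at t) \<and> y \<ge> 0" by auto
  next
    show "continuous_on {a..b} F" unfolding F_def by (intro continuous_intros cont)
  qed
  then have "E a * exp (C * a) \<le> 0" unfolding F_def using Eb by simp
  then have "E a \<le> 0" by (simp add: mult_le_0_iff)
  then show ?thesis using nn[of a] ab by simp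
qed

locale gsl =
  fixes p M :: real and u u1 u2 :: "real \<Rightarrow> real"
  assumes p: "p > 1"
    and du: "\<And>r. r \<ge> 0 \<Longrightarrow> (u has_real_derivative u1 r) (at r within {0..})"
    and du1: "\<And>r. r \<ge> 0 \<Longrightarrow> (u1 has_real_derivative u2 r) (at r within {0..})"
    and cu2: "continuous_on {0..} u2"
    and u10: "u1 0 = 0"
    and unn: "\<And>r. r \<ge> 0 \<Longrightarrow> u r \<ge> 0"
    and ntriv: "\<exists>r\<ge>0. u r \<noteq> 0"
    and eq: "\<And>r. r > 0 \<Longrightarrow> - u2 r = \<bar>u r\<bar> powr (p-1) * u r + M * \<bar>u1 r\<bar> powr (2*p/(p+1))"
begin

lemma du_at: "r > 0 \<Longrightarrow> (u has_real_derivative u1 r) (at r)"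
proof -
  assume r: "r > 0"
  have "(u has_real_derivative u1 r) (at r within {0<..})"
    by (rule DERIV_subset[OF du]) (use r in auto)
  then show ?thesis using at_within_open[of r "{0<..}"] r by simp
qed

lemma du1_at: "r > 0 \<Longrightarrow> (u1 has_real_derivative u2 r) (at r)"
proof -
  assume r: "r > 0"
  have "(u1 has_real_derivative u2 r) (at r within {0<..})"
    by (rule DERIV_subset[OF du1]) (use r in auto)
  then show ?thesis using at_within_open[of r "{0<..}"] r by simp
qed

lemma cont_u: "continuous_on {0..} u"
  unfolding continuous_on_eq_continuous_within
  using DERIV_continuous[OF du] by auto

lemma cont_u1: "continuous_on {0..} u1"
  unfolding continuous_on_eq_continuous_within
  using DERIV_continuous[OF du1] by auto

lemma eq': "r > 0 \<Longrightarrow> u2 r = - (u r powr p + M * \<bar>u1 r\<bar> powr (2*p/(p+1)))"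
proof -
  assume r: "r > 0"
  have "\<bar>u r\<bar> powr (p-1) * u r = u r powr p"
  proof (cases "u r = 0")
    case False
    then have "u r > 0" using unn[of r] r by simp
    then show ?thesis by (simp add: powr_diff)
  qed (use p in simp)
  then show ?thesis using eq[OF r] by linarith
qed

lemma E_bound:
  assumes t: "t > 0" and E1: "(u t)^2 + (u1 t)^2 \<le> 1"
  shows "\<bar>2 * u t * u1 t + 2 * u1 t * u2 t\<bar> \<le> (2 + 2 * \<bar>M\<bar>) * ((u t)^2 + (u1 t)^2)"
proof -
  define x where "x = u t"
  define y where "y = u1 t"
  have x0: "x \<ge> 0" unfolding x_def using unn[of t] t by simp
  have "x^2 \<le> 1" "y^2 \<le> 1" using E1 unfolding x_def[symmetric] y_def[symmetric]
    by (smt (verit) zero_le_power2)+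
  then have x1: "x \<le> 1" and y1: "\<bar>y\<bar> \<le> 1" using x0 by (simp_all add: abs_square_le_1)
  have q1: "1 \<le> 2*p/(p+1)" using p by (simp add: field_simps)
  have a: "x powr p \<le> x" using powr_mono'[of 1 p x] x0 x1 p by simp
  have b: "\<bar>y\<bar> powr (2*p/(p+1)) \<le> \<bar>y\<bar>" using powr_mono'[OF q1, of "\<bar>y\<bar>"] y1 by simp
  have u2: "u2 t = - (x powr p + M * \<bar>y\<bar> powr (2*p/(p+1)))" unfolding x_def y_def by (rule eq'[OF t])
  have "\<bar>u2 t\<bar> \<le> x powr p + \<bar>M * \<bar>y\<bar> powr (2*p/(p+1))\<bar>" unfolding u2
    using abs_triangle_ineq[of "x powr p" "M * \<bar>y\<bar> powr (2*p/(p+1))"] by simp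
  also have "\<bar>M * \<bar>y\<bar> powr (2*p/(p+1))\<bar> = \<bar>M\<bar> * \<bar>y\<bar> powr (2*p/(p+1))" by (simp add: abs_mult)
  also have "x powr p + \<bar>M\<bar> * \<bar>y\<bar> powr (2*p/(p+1)) \<le> x + \<bar>M\<bar> * \<bar>y\<bar>"
    using a b by (intro add_mono mult_left_mono) auto
  finally have u2b: "\<bar>u2 t\<bar> \<le> x + \<bar>M\<bar> * \<bar>y\<bar>" .
  have i1: "\<bar>2 * y * u2 t\<bar> \<le> 2 * \<bar>y\<bar> * (x + \<bar>M\<bar> * \<bar>y\<bar>)"
    using u2b by (simp add: abs_mult mult_left_mono)
  have i2: "\<bar>2 * x * y\<bar> = 2 * x * \<bar>y\<bar>" using x0 by (simp add: abs_mult)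
  have sq: "(x - \<bar>y\<bar>)^2 = x^2 - 2 * x * \<bar>y\<bar> + y^2" by (simp add: power2_diff)
  have i3: "2 * x * \<bar>y\<bar> \<le> x^2 + y^2" using sq zero_le_power2[of "x - \<bar>y\<bar>"] by linarith
  have i4: "2 * \<bar>y\<bar> * (x + \<bar>M\<bar> * \<bar>y\<bar>) = 2 * x * \<bar>y\<bar> + 2 * \<bar>M\<bar> * y^2"
    by (simp add: power2_eq_square algebra_simps)
  have i5: "2 * \<bar>M\<bar> * y^2 \<le> 2 * \<bar>M\<bar> * (x^2 + y^2)" by (intro mult_left_mono) auto
  have gen3: "\<And>A S B C::real. A \<le> S \<Longrightarrow> B \<le> C \<Longrightarrow> A + (A + B) \<le> 2 * S + C" by linarith
  have i6: "(2 + 2 * \<bar>M\<bar>) * (x^2 + y^2) = 2 * (x^2 + y^2) + 2 * \<bar>M\<bar> * (x^2 + y^2)"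
    by (simp add: algebra_simps)
  have "\<bar>2 * x * y + 2 * y * u2 t\<bar> \<le> \<bar>2 * x * y\<bar> + \<bar>2 * y * u2 t\<bar>" by (rule abs_triangle_ineq)
  also have "\<dots> \<le> 2 * x * \<bar>y\<bar> + (2 * x * \<bar>y\<bar> + 2 * \<bar>M\<bar> * y^2)" using i1 i2 i4 by linarith
  also have "\<dots> \<le> 2 * (x^2 + y^2) + 2 * \<bar>M\<bar> * (x^2 + y^2)" 
    by (rule gen3[OF i3 i5])
  also have "\<dots> = (2 + 2 * \<bar>M\<bar>) * (x^2 + y^2)" using i6 by simp
  finally have "\<bar>2 * x * y + 2 * y * u2 t\<bar> \<le> (2 + 2 * \<bar>M\<bar>) * (x^2 + y^2)" .
  then show ?thesis unfolding x_def y_def .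
qed

lemma local_zero:
  assumes r0: "r0 \<ge> 0" and z: "u r0 = 0" "u1 r0 = 0"
  shows "\<exists>e>0. \<forall>t\<ge>0. \<bar>t - r0\<bar> \<le> e \<longrightarrow> u t = 0"
proof -
  define E where "E t = (u t)^2 + (u1 t)^2" for t
  define E' where "E' t = 2 * u t * u1 t + 2 * u1 t * u2 t" for t
  define C where "C = 2 + 2 * \<bar>M\<bar>"
  have C: "C \<ge> 0" unfolding C_def by simp
  have cE: "continuous_on {0..} E" unfolding E_def using cont_u cont_u1 by (intro continuous_intros)
  have dE: "\<And>t. t > 0 \<Longrightarrow> (E has_real_derivative E' t) (at t)"
    unfolding E_def E'_def by (auto intro!: derivative_eq_intros du_at du1_at)
  have E0: "E r0 = 0" unfolding E_def using z by simp
  have Enn: "\<And>t. E t \<ge> 0" unfolding E_def by simp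
  obtain d where d: "d > 0" "\<And>t. t \<in> {0..} \<Longrightarrow> dist t r0 < d \<Longrightarrow> dist (E t) (E r0) < 1"
    using cE r0 unfolding continuous_on_iff by (metis atLeast_iff zero_less_one)
  have Esmall: "\<And>t. t \<ge> 0 \<Longrightarrow> \<bar>t - r0\<bar> < d \<Longrightarrow> E t \<le> 1"
    using d(2) E0 by (fastforce simp: dist_real_def)
  have bnd: "\<And>t. t > 0 \<Longrightarrow> \<bar>t - r0\<bar> < d \<Longrightarrow> \<bar>E' t\<bar> \<le> C * E t"
    unfolding E'_def C_def E_def using E_bound Esmall unfolding E_def by auto
  show ?thesis
  proof (intro exI[of _ "d/2"] conjI allI impI)
    show "d/2 > 0" using d by simp
    fix t assume t: "t \<ge> 0" "\<bar>t - r0\<bar> \<le> d/2"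
    show "u t = 0"
    proof (cases "t \<ge> r0")
      case True
      have "E t = 0"
      proof (rule gronwall_fwd[of r0 t C E E'])
        show "continuous_on {r0..t} E" by (rule continuous_on_subset[OF cE]) (use r0 in auto)
        show "\<And>s. r0 < s \<Longrightarrow> s < t \<Longrightarrow> (E has_real_derivative E' s) (at s)" using dE r0 by auto
        show "\<And>s. r0 < s \<Longrightarrow> s < t \<Longrightarrow> E' s \<le> C * E s"
        proof -
          fix s assume s: "r0 < s" "s < t"
          have "\<bar>E' s\<bar> \<le> C * E s" by (rule bnd) (use r0 t s d in auto)
          then show "E' s \<le> C * E s" by simp
        qed
      qed (use Enn C E0 True in auto)
      then show ?thesis unfolding E_def by simp
    next
      case False
      have "E t = 0"
      proof (rule gronwall_bwd[of t r0 C E E'])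
        show "t \<le> r0" using False by simp
        show "continuous_on {t..r0} E" by (rule continuous_on_subset[OF cE]) (use t in auto)
        show "\<And>s. t < s \<Longrightarrow> s < r0 \<Longrightarrow> (E has_real_derivative E' s) (at s)" using dE t by auto
        show "\<And>s. t < s \<Longrightarrow> s < r0 \<Longrightarrow> - E' s \<le> C * E s"
        proof -
          fix s assume s: "t < s" "s < r0"
          have "\<bar>E' s\<bar> \<le> C * E s" by (rule bnd) (use r0 t s d in auto)
          then show "- E' s \<le> C * E s" by simp
        qed
      qed (use Enn C E0 in auto)
      then show ?thesis unfolding E_def by simp
    qed
  qed
qed

end


context gsl begin

lemma zero_deriv:
  assumes r0: "r0 \<ge> 0" and z: "u r0 = 0"
  shows "u1 r0 = 0"
proof (cases "r0 = 0")
  case True then show ?thesis using u10 by simp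
next
  case False
  then have r0p: "r0 > 0" using r0 by simp
  show ?thesis
  proof (rule DERIV_local_min[OF du_at[OF r0p] r0p], intro allI impI)
    fix y assume "\<bar>r0 - y\<bar> < r0"
    then have "y \<ge> 0" by simp
    then show "u r0 \<le> u y" using z unn by simp
  qed
qed

lemma u0_pos: "u 0 > 0"
proof (rule ccontr)
  assume "\<not> u 0 > 0"
  then have u0: "u 0 = 0" using unn[of 0] by simp
  obtain r where r: "r \<ge> 0" "u r \<noteq> 0" using ntriv by auto
  have rp: "r > 0" using r u0 by (cases "r = 0") auto
  define T where "T = {0..r} \<inter> u -` {0}"
  have cl: "closed T" unfolding T_def
    by (rule continuous_closed_preimage) (auto intro: continuous_on_subset[OF cont_u])
  have bdd: "bdd_above T" unfolding T_def by (auto intro: bdd_aboveI[of _ r])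
  have ne: "0 \<in> T" unfolding T_def using u0 rp by auto
  define r0 where "r0 = Sup T"
  have inT: "r0 \<in> T" unfolding r0_def using closed_contains_Sup[OF _ bdd cl] ne by auto
  have up: "\<And>t. t \<in> T \<Longrightarrow> t \<le> r0" unfolding r0_def by (rule cSup_upper[OF _ bdd])
  have r0: "0 \<le> r0" "r0 \<le> r" "u r0 = 0" using inT unfolding T_def by auto
  have r0r: "r0 < r" using r0 r by (cases "r0 = r") auto
  obtain e where e: "e > 0" "\<And>t. t \<ge> 0 \<Longrightarrow> \<bar>t - r0\<bar> \<le> e \<Longrightarrow> u t = 0"
    using local_zero[OF r0(1) r0(3) zero_deriv[OF r0(1) r0(3)]] by auto
  define t where "t = min r (r0 + e)"
  have t: "r0 < t" "t \<le> r" "\<bar>t - r0\<bar> \<le> e" unfolding t_def using r0r e r0 by auto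
  then have "u t = 0" using e(2)[of t] r0 by simp
  then have "t \<in> T" unfolding T_def using t r0 by auto
  then show False using up[of t] t by simp
qed

lemma u2_neg_near0: "\<exists>d>0. \<forall>t. 0 < t \<longrightarrow> t < d \<longrightarrow> u2 t < 0"
proof -
  define h where "h t = \<bar>u t\<bar> powr (p-1) * u t + M * \<bar>u1 t\<bar> powr (2*p/(p+1))" for t
  have ch: "continuous_on {0..} h" unfolding h_def
    using p cont_u cont_u1
    by (intro continuous_on_add continuous_on_mult continuous_on_const continuous_on_powr' continuous_on_rabs) auto
  have h0: "h 0 > 0" unfolding h_def using u0_pos u10 p by simp
  obtain d where d: "d > 0" "\<And>t. t \<in> {0..} \<Longrightarrow> dist t 0 < d \<Longrightarrow> dist (h t) (h 0) < h 0"
    using ch h0 unfolding continuous_on_iff by (metis atLeast_iff order_refl)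
  show ?thesis
  proof (intro exI[of _ d] conjI allI impI)
    fix t assume t: "0 < t" "t < d"
    then have "dist (h t) (h 0) < h 0" using d(2)[of t] by simp
    then have "h t > 0" by (simp add: dist_real_def)
    then show "u2 t < 0" using eq[OF t(1)] unfolding h_def by simp
  qed (use d in simp)
qed

lemma u1_neg: "r > 0 \<Longrightarrow> u1 r < 0"
proof (rule ccontr)
  assume rp: "r > 0" and "\<not> u1 r < 0"
  then have ur: "u1 r \<ge> 0" by simp
  obtain d where d: "d > 0" "\<And>t. 0 < t \<Longrightarrow> t < d \<Longrightarrow> u2 t < 0" using u2_neg_near0 by auto
  have small: "\<And>t. 0 < t \<Longrightarrow> t < d \<Longrightarrow> u1 t < 0"
  proof -
    fix t assume t: "0 < t" "t < d"
    have "u1 0 > u1 t"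
    proof (rule DERIV_neg_imp_decreasing_open[OF t(1)])
      fix x assume "0 < x" "x < t"
      then show "\<exists>y. (u1 has_real_derivative y) (at x) \<and> y < 0"
        using du1_at d(2) t by (intro exI[of _ "u2 x"]) auto
    qed (rule continuous_on_subset[OF cont_u1], auto)
    then show "u1 t < 0" using u10 by simp
  qed
  define d2 where "d2 = d/2"
  have d2: "0 < d2" "d2 < d" "u1 d2 < 0" unfolding d2_def using d small[of "d/2"] by auto
  have rd: "d2 < r" using small[of r] rp ur d2 by (cases "r < d") auto
  define T where "T = {d2..r} \<inter> u1 -` {0..}"
  have cl: "closed T" unfolding T_def
    by (rule continuous_closed_preimage) (use d2 in \<open>auto intro: continuous_on_subset[OF cont_u1]\<close>)
  have bdd: "bdd_below T" unfolding T_def by (auto intro: bdd_belowI[of _ d2])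
  have ne: "r \<in> T" unfolding T_def using ur rd by auto
  define r1 where "r1 = Inf T"
  have inT: "r1 \<in> T" unfolding r1_def using closed_contains_Inf[OF _ bdd cl] ne by auto
  have low: "\<And>t. t \<in> T \<Longrightarrow> r1 \<le> t" unfolding r1_def by (rule cInf_lower[OF _ bdd])
  have r1: "d2 \<le> r1" "u1 r1 \<ge> 0" using inT unfolding T_def by auto
  have r1d: "d2 < r1" using r1 d2 by (cases "r1 = d2") auto
  have r1r: "r1 \<le> r" using inT unfolding T_def by auto
  have neg: "\<And>t. 0 < t \<Longrightarrow> t < r1 \<Longrightarrow> u1 t < 0"
  proof -
    fix t assume t: "0 < t" "t < r1"
    show "u1 t < 0"
    proof (cases "t < d")
      case True then show ?thesis using small t by simp
    next
      case False
      then have "d2 \<le> t" using d2 by simp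
      show ?thesis
      proof (rule ccontr)
        assume "\<not> u1 t < 0"
        then have "t \<in> T" unfolding T_def using \<open>d2 \<le> t\<close> t r1r by auto
        then show False using low[of t] t by simp
      qed
    qed
  qed
  have u1r1: "u1 r1 = 0"
  proof (rule ccontr)
    assume "u1 r1 \<noteq> 0"
    then have pos: "u1 r1 > 0" using r1 by simp
    obtain t where t: "d2 \<le> t" "t \<le> r1" "u1 t = 0"
      using IVT'[of u1 d2 0 r1] d2 pos r1d continuous_on_subset[OF cont_u1, of "{d2..r1}"] by auto
    have "t \<noteq> r1" using t pos by auto
    then show False using neg[of t] t d2 by simp
  qed
  have r1p: "r1 > 0" using r1d d2 by simp
  show False
  proof (cases "u r1 = 0")
    case False
    then have upos: "u r1 > 0" using unn[of r1] r1p by simp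
    have "u2 r1 < 0" using eq'[OF r1p] u1r1 upos p by simp
    then obtain e where e: "e > 0" "\<And>h. h > 0 \<Longrightarrow> h < e \<Longrightarrow> u1 r1 < u1 (r1 - h)"
      using DERIV_neg_dec_left[OF du1_at[OF r1p]] by auto
    define h where "h = min e r1 / 2"
    have h: "h > 0" "h < e" "h < r1" unfolding h_def using e r1p by auto
    then have "0 < u1 (r1 - h)" using e(2)[of h] u1r1 by simp
    moreover have "u1 (r1 - h) < 0" using neg[of "r1 - h"] h by simp
    ultimately show False by simp
  next
    case True
    obtain e where e: "e > 0" "\<And>t. t \<ge> 0 \<Longrightarrow> \<bar>t - r1\<bar> \<le> e \<Longrightarrow> u t = 0"
      using local_zero[OF less_imp_le[OF r1p] True u1r1] by auto
    define t where "t = max 0 (r1 - e)"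
    have t: "0 \<le> t" "t < r1" "\<bar>t - r1\<bar> \<le> e" unfolding t_def using e r1p by auto
    have "u t > u r1"
    proof (rule DERIV_neg_imp_decreasing_open[OF t(2)])
      fix x assume "t < x" "x < r1"
      then show "\<exists>y. (u has_real_derivative y) (at x) \<and> y < 0"
        using du_at neg t by (intro exI[of _ "u1 x"]) auto
    qed (rule continuous_on_subset[OF cont_u], use t in auto)
    then show False using e(2)[OF t(1) t(3)] True by simp
  qed
qed

lemma u_decr: "0 \<le> a \<Longrightarrow> a < b \<Longrightarrow> u b < u a"
proof -
  assume ab: "0 \<le> a" "a < b"
  show "u b < u a"
  proof (rule DERIV_neg_imp_decreasing_open[OF ab(2)])
    fix x assume "a < x" "x < b"
    then show "\<exists>y. (u has_real_derivative y) (at x) \<and> y < 0"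
      using du_at u1_neg ab by (intro exI[of _ "u1 x"]) auto
  qed (rule continuous_on_subset[OF cont_u], use ab in auto)
qed

lemma u_pos: "r \<ge> 0 \<Longrightarrow> u r > 0"
proof -
  assume r: "r \<ge> 0"
  have "u (r+1) < u r" by (rule u_decr) (use r in auto)
  moreover have "u (r+1) \<ge> 0" using unn r by simp
  ultimately show "u r > 0" by simp
qed

end


context gsl begin

definition sf where "sf r = (u1 r)^2 / (2 * u r powr (p+1))"

lemma sf_nonneg: "r \<ge> 0 \<Longrightarrow> sf r \<ge> 0"
  unfolding sf_def using u_pos[of r] by simp

lemma sf_pos: "r > 0 \<Longrightarrow> sf r > 0"
  unfolding sf_def using u_pos[of r] u1_neg[of r] by simp

lemma sf0: "sf 0 = 0" unfolding sf_def using u10 by simp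

lemma u_nz: "r \<ge> 0 \<Longrightarrow> u r \<noteq> 0" using u_pos[of r] by simp

lemma sf_cont: "continuous_on {0..} sf"
proof -
  have "continuous_on {0..} (\<lambda>r. (u1 r)^2 / (2 * u r powr (p+1)))"
    using cont_u cont_u1 by (intro continuous_intros) (auto simp: u_nz)
  then show ?thesis unfolding sf_def[abs_def] .
qed

lemma u1_sq: "r \<ge> 0 \<Longrightarrow> (u1 r)^2 = 2 * sf r * u r powr (p+1)"
  unfolding sf_def using u_pos[of r] by simp

lemma u1_pow: "r \<ge> 0 \<Longrightarrow> \<bar>u1 r\<bar> powr (2*p/(p+1)) = (2 * sf r) powr (p/(p+1)) * u r powr p"
proof -
  assume r: "r \<ge> 0"
  have up: "u r > 0" using u_pos[OF r] .
  have ex: "2 * (p/(p+1)) = 2*p/(p+1)" by simp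
  have "\<bar>u1 r\<bar> powr (2*p/(p+1)) = (\<bar>u1 r\<bar> powr 2) powr (p/(p+1))" unfolding powr_powr ex ..
  also have "\<bar>u1 r\<bar> powr 2 = (u1 r)^2"
    by (cases "u1 r = 0") (simp_all add: powr_numeral)
  also have "\<dots> = (2 * sf r) * u r powr (p+1)" using u1_sq[OF r] by simp
  also have "((2 * sf r) * u r powr (p+1)) powr (p/(p+1)) = (2 * sf r) powr (p/(p+1)) * (u r powr (p+1)) powr (p/(p+1))"
    using sf_nonneg[OF r] up by (simp add: powr_mult)
  also have "(u r powr (p+1)) powr (p/(p+1)) = u r powr p"
  proof -
    have "(p+1)*(p/(p+1)) = p" using p by simp
    then show ?thesis by (simp add: powr_powr)
  qed
  finally show ?thesis .
qed

lemma sf_deriv: "r > 0 \<Longrightarrow> (sf has_real_derivative (u1 r / u r) * gg p M (sf r)) (at r)"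
proof -
  assume r: "r > 0"
  have up: "u r > 0" using u_pos r by simp
  have d1: "((\<lambda>r. (u1 r)^2) has_real_derivative 2 * u1 r * u2 r) (at r)"
    using du1_at[OF r] by (auto intro!: derivative_eq_intros)
  have d2: "((\<lambda>r. 2 * u r powr (p+1)) has_real_derivative 2 * ((p+1) * u r powr p * u1 r)) (at r)"
    using DERIV_cmult[OF DERIV_fun_powr[OF du_at[OF r] up, of "p+1"], of 2] by simp
  have dd: "((\<lambda>r. (u1 r)^2 / (2 * u r powr (p+1))) has_real_derivative
     ((2 * u1 r * u2 r) * (2 * u r powr (p+1)) - (u1 r)^2 * (2 * ((p+1) * u r powr p * u1 r))) / ((2 * u r powr (p+1)) * (2 * u r powr (p+1)))) (at r)"
    by (rule DERIV_divide[OF d1 d2]) (use up in simp)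
  define P where "P = u r powr p"
  have P: "P > 0" unfolding P_def using up by simp
  have e1: "u r powr (p+1) = P * u r" unfolding P_def using up by (simp add: powr_add)
  define G where "G = (2 * sf r) powr (p/(p+1))"
  have e2: "u2 r = - (P + M * (G * P))"
    using eq'[OF r] u1_pow[of r] r unfolding P_def G_def by simp
  have e3: "sf r = (u1 r)^2 / (2 * (P * u r))" unfolding sf_def e1 ..
  have gg: "gg p M (sf r) = - M * G - 1 - (p+1) * sf r" unfolding gg_def G_def ..
  have eqv: "((2 * u1 r * u2 r) * (2 * u r powr (p+1)) - (u1 r)^2 * (2 * ((p+1) * u r powr p * u1 r))) / ((2 * u r powr (p+1)) * (2 * u r powr (p+1)))
      = (u1 r / u r) * gg p M (sf r)"
    unfolding gg unfolding e1 e2 e3 P_def[symmetric] using P up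
    by (simp add: field_simps power2_eq_square)
  have "sf = (\<lambda>r. (u1 r)^2 / (2 * u r powr (p+1)))" by (rule ext) (simp add: sf_def)
  then show ?thesis using DERIV_cong[OF dd eqv] by simp
qed

lemma sf_isCont: "r > 0 \<Longrightarrow> isCont sf r"
  using DERIV_isCont[OF sf_deriv] .

end


context gsl begin

lemma no_neg_bound:
  assumes r1: "r1 > 0" and c: "c > 0" and b: "\<And>r. r \<ge> r1 \<Longrightarrow> u1 r \<le> - c"
  shows False
proof -
  define B where "B = r1 + u r1 / c + 1"
  have "u r1 / c > 0" using u_pos[of r1] r1 c by simp
  then have Br: "r1 < B" unfolding B_def by simp
  have "u B + c * B \<le> u r1 + c * r1"
  proof (rule DERIV_nonpos_imp_decreasing_open[of r1 B "\<lambda>r. u r + c * r", OF less_imp_le[OF Br]])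
    fix x assume x: "r1 < x" "x < B"
    have "((\<lambda>r. u r + c * r) has_real_derivative u1 x + c) (at x)"
      using du_at[of x] x r1 by (auto intro!: derivative_eq_intros)
    moreover have "u1 x + c \<le> 0" using b[of x] x by simp
    ultimately show "\<exists>y. ((\<lambda>r. u r + c * r) has_real_derivative y) (at x) \<and> y \<le> 0" by blast
  next
    show "continuous_on {r1..B} (\<lambda>r. u r + c * r)"
      using continuous_on_subset[OF cont_u, of "{r1..B}"] r1 by (auto intro!: continuous_intros)
  qed
  then have "u B \<le> u r1 - c * (B - r1)" by (simp add: algebra_simps)
  also have "c * (B - r1) = u r1 + c" unfolding B_def using c by (simp add: field_simps)
  finally have "u B \<le> - c" by simp
  then show False using u_pos[of B] Br r1 c by simp
qed

lemma sf_mono: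
  assumes ab: "0 \<le> a" "a \<le> b" and g: "\<And>r. a < r \<Longrightarrow> r < b \<Longrightarrow> gg p M (sf r) \<le> 0"
  shows "sf a \<le> sf b"
proof (rule DERIV_nonneg_imp_increasing_open[OF ab(2)])
  fix x assume x: "a < x" "x < b"
  have xp: "x > 0" using x ab by simp
  have "u1 x / u x * gg p M (sf x) \<ge> 0"
    using u1_neg[OF xp] u_pos[of x] xp g[OF x] by (intro mult_nonpos_nonpos) (use divide_nonpos_pos[of "u1 x" "u x"] in auto)
  then show "\<exists>y. (sf has_real_derivative y) (at x) \<and> 0 \<le> y" using sf_deriv[OF xp] by blast
qed (rule continuous_on_subset[OF sf_cont], use ab in auto)

lemma lemmaP:
  assumes dl: "dl > 0" and g: "\<And>r. r > 0 \<Longrightarrow> gg p M (sf r) \<le> - dl"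
    and S: "\<And>r. r > 0 \<Longrightarrow> sf r \<le> S"
  shows False
proof -
  define F where "F r = sf r + dl * ln (u r)" for r
  have dF: "\<And>r. r > 0 \<Longrightarrow> (F has_real_derivative (u1 r / u r) * gg p M (sf r) + dl * (u1 r / u r)) (at r)"
  proof -
    fix r :: real assume r: "r > 0"
    show "(F has_real_derivative (u1 r / u r) * gg p M (sf r) + dl * (u1 r / u r)) (at r)"
      unfolding F_def using sf_deriv[OF r] du_at[OF r] u_pos[of r] r
      by (auto intro!: derivative_eq_intros simp: divide_inverse mult.commute)
  qed
  have Fmono: "\<And>r. r \<ge> 1 \<Longrightarrow> F 1 \<le> F r"
  proof -
    fix r :: real assume r: "r \<ge> 1"
    show "F 1 \<le> F r"
    proof (rule DERIV_nonneg_imp_increasing_open[OF r])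
      fix x :: real assume x: "1 < x" "x < r"
      then have xp: "x > 0" by simp
      have "(u1 x / u x) * (gg p M (sf x) + dl) \<ge> 0"
        using u1_neg[OF xp] u_pos[of x] xp g[OF xp]
        by (intro mult_nonpos_nonpos) (use divide_nonpos_pos[of "u1 x" "u x"] in auto)
      then have "(u1 x / u x) * gg p M (sf x) + dl * (u1 x / u x) \<ge> 0" by (simp add: algebra_simps)
      then show "\<exists>y. (F has_real_derivative y) (at x) \<and> 0 \<le> y" using dF[OF xp] by blast
    next
      show "continuous_on {1..r} F"
        by (rule continuous_at_imp_continuous_on) (use DERIV_isCont[OF dF] in auto)
    qed
  qed
  define L where "L = exp ((F 1 - S) / dl)"
  have L: "L > 0" unfolding L_def by simp
  have uL: "\<And>r. r \<ge> 1 \<Longrightarrow> u r \<ge> L"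
  proof -
    fix r :: real assume r: "r \<ge> 1"
    have "dl * ln (u r) \<ge> F 1 - S" using Fmono[OF r] S[of r] r unfolding F_def by simp
    then have "ln (u r) \<ge> (F 1 - S) / dl" using dl by (simp add: field_simps)
    then have "exp ((F 1 - S) / dl) \<le> exp (ln (u r))" by simp
    then show "u r \<ge> L" unfolding L_def using u_pos[of r] r by simp
  qed
  have s1pos: "sf 1 > 0" using sf_pos by simp
  define c0 where "c0 = 2 * sf 1 * L powr (p+1)"
  have c0: "c0 > 0" unfolding c0_def using s1pos L by simp
  have bnd: "\<And>r. r \<ge> 1 \<Longrightarrow> u1 r \<le> - sqrt c0"
  proof -
    fix r :: real assume r: "r \<ge> 1"
    have "sf 1 \<le> sf r" by (rule sf_mono) (use r g dl in \<open>auto intro: order_trans[of _ "- dl"]\<close>)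
    moreover have "L powr (p+1) \<le> u r powr (p+1)" using uL[OF r] L p by (intro powr_mono2) auto
    ultimately have "2 * sf 1 * L powr (p+1) \<le> 2 * sf r * u r powr (p+1)" using r s1pos L
      by (intro mult_mono mult_left_mono) auto
    moreover have "(u1 r)^2 = 2 * sf r * u r powr (p+1)" by (rule u1_sq) (use r in simp)
    ultimately have "c0 \<le> (u1 r)^2" unfolding c0_def by simp
    then have "sqrt c0 \<le> \<bar>u1 r\<bar>" using real_sqrt_le_mono by fastforce
    then show "u1 r \<le> - sqrt c0" using u1_neg[of r] r by simp
  qed
  show False by (rule no_neg_bound[of 1 "sqrt c0"]) (use bnd c0 in auto)
qed

end


context gsl begin

lemma y_deriv_bound:
  assumes r: "r > 0" and kap: "- M * 2 powr (p/(p+1)) / (p+1) \<le> kap"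
  shows "\<exists>y'. ((\<lambda>r. ((u1 r)^2/2) powr (1/(p+1))) has_real_derivative y') (at r) \<and> y' \<ge> kap * u1 r"
proof -
  define z where "z = (u1 r)^2/2"
  have z: "z > 0" unfolding z_def using u1_neg[OF r] by simp
  have dz: "((\<lambda>r. (u1 r)^2/2) has_real_derivative u1 r * u2 r) (at r)"
    using du1_at[OF r] by (auto intro!: derivative_eq_intros)
  define Zm where "Zm = z powr (1/(p+1) - 1)"
  have Zm: "Zm > 0" unfolding Zm_def using z by simp
  have d: "((\<lambda>r. ((u1 r)^2/2) powr (1/(p+1))) has_real_derivative (1/(p+1)) * Zm * (u1 r * u2 r)) (at r)"
    using DERIV_fun_powr[OF dz, of "1/(p+1)"] z unfolding Zm_def z_def by simp
  have q: "\<bar>u1 r\<bar> powr (2*p/(p+1)) = 2 powr (p/(p+1)) * z powr (p/(p+1))"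
  proof -
    have ex: "2 * (p/(p+1)) = 2*p/(p+1)" by simp
    have "\<bar>u1 r\<bar> powr (2*p/(p+1)) = (\<bar>u1 r\<bar> powr 2) powr (p/(p+1))" unfolding powr_powr ex ..
    also have "\<bar>u1 r\<bar> powr 2 = 2 * z" unfolding z_def using u1_neg[OF r] by (simp add: powr_numeral)
    finally show ?thesis using z by (simp add: powr_mult)
  qed
  have Zz: "Zm * z powr (p/(p+1)) = 1"
  proof -
    have "1/(p+1) - 1 + p/(p+1) = 0" using p by (simp add: field_simps)
    then show ?thesis unfolding Zm_def using z by (simp flip: powr_add)
  qed
  have u2: "u2 r = - (u r powr p + M * (2 powr (p/(p+1)) * z powr (p/(p+1))))" using eq'[OF r] q by simp
  have "(1/(p+1)) * Zm * (u1 r * u2 r) = (- (1/(p+1)) * Zm * u r powr p) * u1 r + (- M * 2 powr (p/(p+1)) / (p+1)) * (Zm * z powr (p/(p+1))) * u1 r"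
    unfolding u2 by (simp add: algebra_simps)
  also have "\<dots> = (- (1/(p+1)) * Zm * u r powr p) * u1 r + (- M * 2 powr (p/(p+1)) / (p+1)) * u1 r"
    unfolding Zz by simp
  also have "\<dots> \<ge> kap * u1 r"
  proof -
    have "(- (1/(p+1)) * Zm * u r powr p) * u1 r \<ge> 0"
      using Zm u1_neg[OF r] p by (intro mult_nonpos_nonpos) (auto simp: mult_nonneg_nonneg)
    moreover have "(- M * 2 powr (p/(p+1)) / (p+1)) * u1 r \<ge> kap * u1 r"
      using kap u1_neg[OF r] by (intro mult_right_mono_neg) auto
    ultimately show ?thesis by linarith
  qed
  finally show ?thesis using d by blast
qed

lemma nonexist:
  assumes M: "M > - mu_star1 p"
  shows False
proof -
  obtain dl where dl: "dl > 0" "\<And>s. s \<ge> 0 \<Longrightarrow> gg p M s \<le> - dl"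
  proof (cases "M \<ge> 0")
    case True
    show ?thesis
    proof (rule that[of 1])
      fix s :: real assume s: "s \<ge> 0"
      have "M * (2 * s) powr (p/(p+1)) \<ge> 0" using True by simp
      moreover have "(p+1) * s \<ge> 0" using s p by simp
      ultimately show "gg p M s \<le> -1" unfolding gg_def by linarith
    qed simp
  next
    case False
    then have M0: "M < 0" by simp
    have neg: "gg p M (xmax p M) < 0" using gg_xmax_sign(1)[OF p M0] M by simp
    show ?thesis by (rule that[of "- gg p M (xmax p M)"]) (use neg gg_max(1)[OF p M0] in auto)
  qed
  define kap where "kap = max 0 (- M * 2 powr (p/(p+1)) / (p+1))"
  have kap0: "kap \<ge> 0" unfolding kap_def by simp
  show False
  proof (cases "\<exists>r1>0. sf r1 > kap powr (p+1)")
    case False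
    then have S: "\<And>r. r > 0 \<Longrightarrow> sf r \<le> kap powr (p+1)" by (meson not_le)
    show False by (rule lemmaP[OF dl(1) _ S]) (use dl(2) sf_nonneg in auto)
  next
    case True
    then obtain r1 where r1: "r1 > 0" "sf r1 > kap powr (p+1)" by auto
    define y where "y r = ((u1 r)^2/2) powr (1/(p+1))" for r
    have yd: "\<And>r. r > 0 \<Longrightarrow> \<exists>y'. (y has_real_derivative y') (at r) \<and> y' \<ge> kap * u1 r"
      unfolding y_def[abs_def] by (rule y_deriv_bound) (auto simp: kap_def)
    have ymono: "\<And>r. r \<ge> r1 \<Longrightarrow> y r1 - kap * u r1 \<le> y r - kap * u r"
    proof -
      fix r assume r: "r \<ge> r1"
      show "y r1 - kap * u r1 \<le> y r - kap * u r"
      proof (rule DERIV_nonneg_imp_increasing_open[OF r, of "\<lambda>r. y r - kap * u r"])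
        fix x assume x: "r1 < x" "x < r"
        then have xp: "x > 0" using r1 by simp
        obtain y' where y': "(y has_real_derivative y') (at x)" "y' \<ge> kap * u1 x" using yd[OF xp] by auto
        have "((\<lambda>r. y r - kap * u r) has_real_derivative y' - kap * u1 x) (at x)"
          using y' du_at[OF xp] by (auto intro!: derivative_eq_intros)
        then show "\<exists>d. ((\<lambda>r. y r - kap * u r) has_real_derivative d) (at x) \<and> 0 \<le> d"
          using y'(2) by (intro exI[of _ "y' - kap * u1 x"]) auto
      next
        have "\<And>x. x \<in> {r1..r} \<Longrightarrow> isCont (\<lambda>r. y r - kap * u r) x"
        proof -
          fix x assume "x \<in> {r1..r}"
          then have xp: "x > 0" using r1 by simp
          obtain y' where "(y has_real_derivative y') (at x)" using yd[OF xp] by auto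
          then show "isCont (\<lambda>r. y r - kap * u r) x"
            using DERIV_isCont du_at[OF xp] by (auto intro!: continuous_intros simp: DERIV_isCont)
        qed
        then show "continuous_on {r1..r} (\<lambda>r. y r - kap * u r)"
          by (intro continuous_at_imp_continuous_on) auto
      qed
    qed
    have yeq: "\<And>r. r > 0 \<Longrightarrow> y r = sf r powr (1/(p+1)) * u r"
    proof -
      fix r :: real assume r: "r > 0"
      have "(u1 r)^2/2 = sf r * u r powr (p+1)" using u1_sq[of r] r by simp
      then have "y r = (sf r * u r powr (p+1)) powr (1/(p+1))" unfolding y_def by simp
      also have "\<dots> = sf r powr (1/(p+1)) * (u r powr (p+1)) powr (1/(p+1))"
        using sf_pos[OF r] u_pos[of r] r by (simp add: powr_mult)
      also have "(u r powr (p+1)) powr (1/(p+1)) = u r" using p u_pos[of r] r by (simp add: powr_powr)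
      finally show "y r = sf r powr (1/(p+1)) * u r" .
    qed
    have "kap = (kap powr (p+1)) powr (1/(p+1))"
      using kap0 p by (cases "kap = 0") (simp_all add: powr_powr)
    also have "\<dots> < sf r1 powr (1/(p+1))" using r1 p kap0 by (intro powr_less_mono2) auto
    finally have kl: "kap < sf r1 powr (1/(p+1))" .
    define c0 where "c0 = y r1 - kap * u r1"
    have c0: "c0 > 0" unfolding c0_def yeq[OF r1(1)] using kl u_pos[of r1] r1
      by (simp add: algebra_simps)
    have bnd: "\<And>r. r \<ge> r1 \<Longrightarrow> u1 r \<le> - sqrt (2 * c0 powr (p+1))"
    proof -
      fix r assume r: "r \<ge> r1"
      have "y r \<ge> c0" using ymono[OF r] kap0 u_pos[of r] r r1 unfolding c0_def
        by (smt (verit) mult_nonneg_nonneg)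
      then have "c0 powr (p+1) \<le> y r powr (p+1)" using c0 p by (intro powr_mono2) auto
      also have "y r powr (p+1) = (u1 r)^2/2" unfolding y_def using p by (simp add: powr_powr)
      finally have "2 * c0 powr (p+1) \<le> (u1 r)^2" by simp
      then have "sqrt (2 * c0 powr (p+1)) \<le> \<bar>u1 r\<bar>" using real_sqrt_le_mono by fastforce
      then show "u1 r \<le> - sqrt (2 * c0 powr (p+1))" using u1_neg[of r] r r1 by simp
    qed
    show False by (rule no_neg_bound[OF r1(1) _ bnd]) (use c0 in simp)
  qed
qed

end


lemma asymp_powr:
  fixes W u :: "real \<Rightarrow> real"
  assumes a: "a > 0" and c: "c > 0" and lim: "((\<lambda>r. W r / r) \<longlongrightarrow> c) F"
    and ev: "eventually (\<lambda>r. r > 0) F" and evu: "eventually (\<lambda>r. u r = W r powr (-a)) F"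
  shows "u \<sim>[F] (\<lambda>r. c powr (-a) * r powr (-a))"
proof (rule asymp_equivI')
  have l1: "((\<lambda>r. (W r / r / c) powr (-a)) \<longlongrightarrow> (c / c) powr (-a)) F"
    using c by (intro tendsto_intros lim) auto
  have evpos: "eventually (\<lambda>r. W r / r > 0) F"
    using lim c by (simp add: order_tendstoD(1))
  have "eventually (\<lambda>r. (W r / r / c) powr (-a) = u r / (c powr (-a) * r powr (-a))) F"
    using ev evu evpos
  proof eventually_elim
    case (elim r)
    then have Wp: "W r > 0" by (simp add: zero_less_divide_iff)
    show ?case using elim Wp c by (simp add: powr_divide powr_mult)
  qed
  then show "((\<lambda>r. u r / (c powr (-a) * r powr (-a))) \<longlongrightarrow> 1) F"
    using l1 c by (simp add: tendsto_cong)
qed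

context gsl begin

lemma sf_lt_s1:
  assumes M: "M \<le> - mu_star1 p" and r: "r \<ge> 0"
  shows "sf r < s1 p M"
proof (rule ccontr)
  assume "\<not> sf r < s1 p M"
  then have rs: "sf r \<ge> s1 p M" by simp
  define S where "S = s1 p M"
  have S: "S > 0" unfolding S_def by (rule s1_props(1)[OF p M])
  define T where "T = {0..r} \<inter> sf -` {S..}"
  have cl: "closed T" unfolding T_def
    by (rule continuous_closed_preimage) (auto intro: continuous_on_subset[OF sf_cont])
  have bdd: "bdd_below T" unfolding T_def by (auto intro: bdd_belowI[of _ 0])
  have ne: "r \<in> T" unfolding T_def S_def using r rs by auto
  define rs where "rs = Inf T"
  have inT: "rs \<in> T" unfolding rs_def using closed_contains_Inf[OF _ bdd cl] ne by auto
  have low: "\<And>t. t \<in> T \<Longrightarrow> rs \<le> t" unfolding rs_def by (rule cInf_lower[OF _ bdd])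
  have rs0: "0 \<le> rs" "rs \<le> r" "sf rs \<ge> S" using inT unfolding T_def by auto
  have rsp: "rs > 0" using rs0 sf0 S by (cases "rs = 0") auto
  have below: "\<And>t. 0 \<le> t \<Longrightarrow> t < rs \<Longrightarrow> sf t < S"
  proof -
    fix t assume t: "0 \<le> t" "t < rs"
    show "sf t < S"
    proof (rule ccontr)
      assume "\<not> sf t < S"
      then have "t \<in> T" unfolding T_def using t rs0 by auto
      then show False using low[of t] t by simp
    qed
  qed
  have seq: "sf rs = S"
  proof (rule ccontr)
    assume "sf rs \<noteq> S"
    then have gt: "sf rs > S" using rs0 by simp
    obtain t where t: "0 \<le> t" "t \<le> rs" "sf t = S"
      using IVT'[of sf 0 S rs] gt sf0 S rs0 continuous_on_subset[OF sf_cont, of "{0..rs}"] by auto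
    then have "t < rs" using gt by (cases "t = rs") auto
    then show False using below[of t] t by simp
  qed
  define h where "h t = \<bar>u1 t\<bar> / u t" for t
  have ch: "continuous_on {0..rs} h" unfolding h_def
    using continuous_on_subset[OF cont_u, of "{0..rs}"] continuous_on_subset[OF cont_u1, of "{0..rs}"]
    by (intro continuous_intros) (auto simp: u_nz)
  obtain x0 where x0: "x0 \<in> {0..rs}" "\<And>t. t \<in> {0..rs} \<Longrightarrow> h t \<le> h x0"
    using continuous_attains_sup[OF compact_Icc _ ch] rs0 by auto
  define B where "B = h x0 / S"
  have B: "B \<ge> 0" unfolding B_def h_def using S u_pos[of x0] x0 by simp
  define phi where "phi t = (S - sf t) * exp (B * t)" for t
  have "phi 0 \<le> phi rs"
  proof (rule DERIV_nonneg_imp_increasing_open[OF rs0(1)])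
    fix x assume x: "0 < x" "x < rs"
    have d: "(phi has_real_derivative (- ((u1 x / u x) * gg p M (sf x))) * exp (B * x) + (S - sf x) * (exp (B * x) * B)) (at x)"
      unfolding phi_def using sf_deriv[OF x(1)] by (auto intro!: derivative_eq_intros)
    have sx: "0 \<le> sf x" "sf x < S" using below[of x] x sf_nonneg[of x] by auto
    have gl: "gg p M (sf x) \<ge> sf x / S - 1" unfolding S_def by (rule gg_chord_low[OF p M]) (use sx S_def in auto)
    have gn: "gg p M (sf x) < 0" using s1_props(4)[OF p M sx(1)] sx S_def by simp
    have ux: "u x > 0" using u_pos x by simp
    have hx: "h x \<le> h x0" using x0(2)[of x] x by simp
    have "(u1 x / u x) * gg p M (sf x) = h x * (- gg p M (sf x))"
      unfolding h_def using u1_neg[OF x(1)] by simp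
    also have "\<dots> \<le> h x * ((S - sf x) / S)"
      using gl S ux unfolding h_def by (intro mult_left_mono) (auto simp: field_simps)
    also have "\<dots> \<le> h x0 * ((S - sf x) / S)"
      using hx sx S by (intro mult_right_mono) auto
    also have "\<dots> = B * (S - sf x)" unfolding B_def by simp
    finally have "- ((u1 x / u x) * gg p M (sf x)) + (S - sf x) * B \<ge> 0" by (simp add: algebra_simps)
    then have "(- ((u1 x / u x) * gg p M (sf x))) * exp (B * x) + (S - sf x) * (exp (B * x) * B) \<ge> 0"
      by (metis (no_types, lifting) distrib_right exp_gt_zero mult.commute mult.left_commute
          mult_nonneg_nonneg less_imp_le)
    then show "\<exists>y. (phi has_real_derivative y) (at x) \<and> 0 \<le> y" using d by blast
  next
    show "continuous_on {0..rs} phi" unfolding phi_def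
      using continuous_on_subset[OF sf_cont, of "{0..rs}"] by (intro continuous_intros) auto
  qed
  then show False unfolding phi_def using seq sf0 S by simp
qed

lemma sf_tendsto:
  assumes M: "M \<le> - mu_star1 p"
  shows "(sf \<longlongrightarrow> s1 p M) at_top"
proof (rule order_tendstoI)
  fix b assume "b > s1 p M"
  then show "eventually (\<lambda>r. sf r < b) at_top"
    using sf_lt_s1[OF M] by (intro eventually_at_top_linorderI[of 0]) (auto intro: less_trans)
next
  fix b assume b: "b < s1 p M"
  show "eventually (\<lambda>r. b < sf r) at_top"
  proof (cases "\<exists>r0>0. sf r0 > b")
    case True
    then obtain r0 where r0: "r0 > 0" "sf r0 > b" by auto
    show ?thesis
    proof (rule eventually_at_top_linorderI[of r0])
      fix r assume r: "r \<ge> r0"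
      have "sf r0 \<le> sf r"
      proof (rule sf_mono)
        fix t assume "r0 < t" "t < r"
        then have t: "t \<ge> 0" using r0 by simp
        show "gg p M (sf t) \<le> 0" using s1_props(4)[OF p M sf_nonneg[OF t] sf_lt_s1[OF M t]] by simp
      qed (use r0 r in auto)
      then show "b < sf r" using r0 by simp
    qed
  next
    case False
    then have S: "\<And>r. r > 0 \<Longrightarrow> sf r \<le> b" by (meson not_le)
    have b0: "b \<ge> 0" using S[of 1] sf_pos[of 1] by simp
    have cg: "continuous_on {0..b} (gg p M)" by (rule continuous_on_subset[OF gg_cont[OF p]]) auto
    obtain x0 where x0: "x0 \<in> {0..b}" "\<And>t. t \<in> {0..b} \<Longrightarrow> gg p M t \<le> gg p M x0"
      using continuous_attains_sup[OF compact_Icc _ cg] b0 by auto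
    have gx0: "gg p M x0 < 0" using s1_props(4)[OF p M, of x0] x0 b by simp
    show ?thesis
    proof (rule FalseE, rule lemmaP[of "- gg p M x0" b])
      show "0 < - gg p M x0" using gx0 by simp
      fix r :: real assume r: "r > 0"
      show "gg p M (sf r) \<le> - (- gg p M x0)" using x0(2)[of "sf r"] S[OF r] sf_nonneg[of r] r by simp
    qed (use S in auto)
  qed
qed

lemma w_deriv:
  assumes r: "r > 0"
  shows "((\<lambda>r. u r powr (- (p-1)/2)) has_real_derivative sqrt (2 * sf r) / aa p) (at r)"
proof -
  have up: "u r > 0" using u_pos r by simp
  have d: "((\<lambda>r. u r powr (- (p-1)/2)) has_real_derivative (- (p-1)/2) * u r powr (- (p-1)/2 - 1) * u1 r) (at r)"
    using DERIV_fun_powr[OF du_at[OF r] up, of "- (p-1)/2"] by simp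
  have "\<bar>u1 r\<bar> = sqrt ((u1 r)^2)" by simp
  also have "(u1 r)^2 = 2 * sf r * u r powr (p+1)" using u1_sq r by simp
  also have "sqrt (2 * sf r * u r powr (p+1)) = sqrt (2 * sf r) * u r powr ((p+1)/2)"
  proof -
    have "sqrt (u r powr (p+1)) = (u r powr (p+1)) powr (1/2)" using up by (simp add: powr_half_sqrt)
    also have "\<dots> = u r powr ((p+1)/2)" by (simp add: powr_powr)
    finally show ?thesis by (simp add: real_sqrt_mult)
  qed
  finally have a1: "u1 r = - (sqrt (2 * sf r) * u r powr ((p+1)/2))" using u1_neg[OF r] by simp
  have a2: "u r powr (- (p-1)/2 - 1) * u r powr ((p+1)/2) = 1"
  proof -
    have "- (p-1)/2 - 1 + (p+1)/2 = 0" by (simp add: field_simps)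
    then show ?thesis using up by (simp flip: powr_add)
  qed
  have "(- (p-1)/2) * u r powr (- (p-1)/2 - 1) * u1 r = ((p-1)/2) * sqrt (2 * sf r) * (u r powr (- (p-1)/2 - 1) * u r powr ((p+1)/2))"
    unfolding a1 by (simp add: algebra_simps)
  also have "\<dots> = sqrt (2 * sf r) / aa p" unfolding a2 aa_def using p by simp
  finally show ?thesis using d by simp
qed

lemma gs_asymp:
  assumes M: "M \<le> - mu_star1 p"
  shows "u \<sim>[at_top] U2 p M"
proof -
  define a where "a = aa p"
  have a: "a > 0" unfolding a_def using aa_pos[OF p] .
  define w where "w r = u r powr (- (p-1)/2)" for r
  define c where "c = sqrt (2 * s1 p M) / a"
  have c: "c > 0" unfolding c_def using s1_props(1)[OF p M] a by simp
  have lim: "((\<lambda>r. w r / r) \<longlongrightarrow> c) at_top"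
  proof (rule lhospital_at_top_at_top[where f' = "\<lambda>r. sqrt (2 * sf r) / a" and g' = "\<lambda>r. 1"])
    show "filterlim (\<lambda>x. x) at_top at_top" by (rule filterlim_ident)
    show "eventually (\<lambda>x. (1::real) \<noteq> 0) at_top" by simp
    show "eventually (\<lambda>x. (w has_real_derivative sqrt (2 * sf x) / a) (at x)) at_top"
      unfolding w_def[abs_def] a_def using w_deriv by (intro eventually_at_top_linorderI[of 1]) auto
    show "eventually (\<lambda>x. ((\<lambda>x. x) has_real_derivative 1) (at x)) at_top" by (auto intro!: derivative_eq_intros)
    show "((\<lambda>x. sqrt (2 * sf x) / a / 1) \<longlongrightarrow> c) at_top"
      unfolding c_def using sf_tendsto[OF M] a by (auto intro!: tendsto_intros)
  qed
  have "u \<sim>[at_top] (\<lambda>r. c powr (-a) * r powr (-a))"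
  proof (rule asymp_powr[OF a c lim])
    show "eventually (\<lambda>r::real. r > 0) at_top" by (rule eventually_gt_at_top)
    show "eventually (\<lambda>r. u r = w r powr (-a)) at_top"
    proof (intro eventually_at_top_linorderI[of 0])
      fix r :: real assume r: "r \<ge> 0"
      have "(- (p-1)/2) * (-a) = 1" unfolding a_def aa_def using p by (simp add: field_simps)
      then show "u r = w r powr (-a)" unfolding w_def using u_pos[OF r] by (simp add: powr_powr)
    qed
  qed
  moreover have "U2 p M = (\<lambda>r. c powr (-a) * r powr (-a))"
    unfolding U2_def X2_eq[OF p M] Phi_def c_def a_def aa_def by (rule ext) simp
  ultimately show ?thesis by simp
qed

end


lemma antideriv_open:
  fixes a b c :: real and f :: "real \<Rightarrow> real"
  assumes ac: "a < c" "c < b" and cont: "\<And>x. a < x \<Longrightarrow> x < b \<Longrightarrow> isCont f x"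
  obtains F where "\<And>x. a < x \<Longrightarrow> x < b \<Longrightarrow> (F has_real_derivative f x) (at x)" "F c = 0"
proof -
  have "ereal a < ereal b" using ac by simp
  from einterval_antiderivative[OF this, of f] cont
  obtain F0 where F0: "\<And>x::real. ereal a < ereal x \<Longrightarrow> ereal x < ereal b \<Longrightarrow> (F0 has_vector_derivative f x) (at x)"
    by auto
  show ?thesis
  proof (rule that[of "\<lambda>x. F0 x - F0 c"])
    fix x assume x: "a < x" "x < b"
    have "(F0 has_real_derivative f x) (at x)"
      using F0[of x] x by (simp add: has_real_derivative_iff_has_vector_derivative)
    then show "((\<lambda>x. F0 x - F0 c) has_real_derivative f x) (at x)"
      by (auto intro!: derivative_eq_intros)
  qed simp
qed

lemma antideriv_UNIV:
  fixes f :: "real \<Rightarrow> real"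
  assumes cont: "\<And>x. isCont f x"
  obtains F where "\<And>x. (F has_real_derivative f x) (at x)" "F 0 = 0"
proof -
  have "(-\<infinity>::ereal) < \<infinity>" by simp
  from einterval_antiderivative[OF this, of f] cont
  obtain F0 where F0: "\<And>x::real. (F0 has_vector_derivative f x) (at x)"
    by auto
  show ?thesis
  proof (rule that[of "\<lambda>x. F0 x - F0 0"])
    fix x
    have "(F0 has_real_derivative f x) (at x)"
      using F0[of x] by (simp add: has_real_derivative_iff_has_vector_derivative)
    then show "((\<lambda>x. F0 x - F0 0) has_real_derivative f x) (at x)"
      by (auto intro!: derivative_eq_intros)
  qed simp
qed

definition sig :: "real \<Rightarrow> real \<Rightarrow> real" where "sig p M = sqrt (s1 p M)"
definition kf :: "real \<Rightarrow> real \<Rightarrow> real \<Rightarrow> real" where "kf p M t = 2 * t / (- gg p M (t^2))"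
definition rho :: "real \<Rightarrow> real \<Rightarrow> (real \<Rightarrow> real) \<Rightarrow> real \<Rightarrow> real" where
  "rho p M Gm t = sqrt 2 * exp ((p-1)/2 * Gm t) / (- gg p M (t^2))"

lemma sig_facts:
  assumes p: "p > 1" and M: "M \<le> - mu_star1 p"
  shows "sig p M > 0" "(sig p M)^2 = s1 p M"
    "\<And>t. \<bar>t\<bar> < sig p M \<Longrightarrow> gg p M (t^2) < 0"
proof -
  have s: "s1 p M > 0" by (rule s1_props(1)[OF p M])
  show sp: "sig p M > 0" unfolding sig_def using s by simp
  show sq: "(sig p M)^2 = s1 p M" unfolding sig_def using s by simp
  fix t :: real assume t: "\<bar>t\<bar> < sig p M"
  have "\<bar>t\<bar>^2 < (sig p M)^2" by (rule power_strict_mono) (use t in auto)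
  then have "t^2 < s1 p M" using sq by simp
  then show "gg p M (t^2) < 0" using s1_props(4)[OF p M, of "t^2"] by simp
qed

locale cB =
  fixes p M :: real and Gm R :: "real \<Rightarrow> real"
  assumes p: "p > 1" and M: "M \<le> - mu_star1 p"
    and dGm: "\<And>t. \<bar>t\<bar> < sig p M \<Longrightarrow> (Gm has_real_derivative kf p M t) (at t)"
    and Gm0: "Gm 0 = 0"
    and dR: "\<And>t. \<bar>t\<bar> < sig p M \<Longrightarrow> (R has_real_derivative rho p M Gm t) (at t)"
    and R0: "R 0 = 0"

lemma cB_exists:
  assumes p: "p > 1" and M: "M \<le> - mu_star1 p"
  shows "\<exists>Gm R. cB p M Gm R"
proof -
  note sg = sig_facts[OF p M]
  have ck: "\<And>x. - sig p M < x \<Longrightarrow> x < sig p M \<Longrightarrow> isCont (kf p M) x"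
  proof -
    fix x assume "- sig p M < x" "x < sig p M"
    then have "gg p M (x^2) < 0" using sg(3)[of x] by simp
    then show "isCont (kf p M) x" unfolding kf_def[abs_def]
      using gg_isCont_sq[OF p] by (auto intro!: continuous_intros)
  qed
  obtain Gm where Gm: "\<And>x. - sig p M < x \<Longrightarrow> x < sig p M \<Longrightarrow> (Gm has_real_derivative kf p M x) (at x)" "Gm 0 = 0"
    using antideriv_open[of "- sig p M" 0 "sig p M" "kf p M"] sg(1) ck by auto
  have cr: "\<And>x. - sig p M < x \<Longrightarrow> x < sig p M \<Longrightarrow> isCont (rho p M Gm) x"
  proof -
    fix x assume x: "- sig p M < x" "x < sig p M"
    then have "gg p M (x^2) < 0" using sg(3)[of x] by simp
    moreover have "isCont Gm x" using DERIV_isCont[OF Gm(1)[OF x]] .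
    ultimately show "isCont (rho p M Gm) x" unfolding rho_def[abs_def]
      using gg_isCont_sq[OF p] by (auto intro!: continuous_intros)
  qed
  obtain R where R: "\<And>x. - sig p M < x \<Longrightarrow> x < sig p M \<Longrightarrow> (R has_real_derivative rho p M Gm x) (at x)" "R 0 = 0"
    using antideriv_open[of "- sig p M" 0 "sig p M" "rho p M Gm"] sg(1) cr by auto
  have "cB p M Gm R"
    by (unfold_locales) (use p M Gm R in \<open>auto simp: abs_less_iff\<close>)
  then show ?thesis by blast
qed


context cB begin

abbreviation "sg \<equiv> sig p M"

lemma sg_pos: "sg > 0" using sig_facts(1)[OF p M] .

lemma g_neg: "\<bar>t\<bar> < sg \<Longrightarrow> gg p M (t^2) < 0" using sig_facts(3)[OF p M] .

lemma Gm_cont_on: "a \<ge> - sg \<Longrightarrow> b \<le> sg \<Longrightarrow> continuous_on {a<..<b} Gm"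
  by (rule continuous_at_imp_continuous_on) (auto intro!: DERIV_isCont[OF dGm])

lemma Gm_cont_Icc: "- sg < a \<Longrightarrow> b < sg \<Longrightarrow> continuous_on {a..b} Gm"
  by (rule continuous_at_imp_continuous_on) (auto intro!: DERIV_isCont[OF dGm])

lemma R_cont_Icc: "- sg < a \<Longrightarrow> b < sg \<Longrightarrow> continuous_on {a..b} R"
  by (rule continuous_at_imp_continuous_on) (auto intro!: DERIV_isCont[OF dR])

lemma Gm_nonneg: "\<bar>t\<bar> < sg \<Longrightarrow> Gm t \<ge> 0"
proof -
  assume t: "\<bar>t\<bar> < sg"
  show "Gm t \<ge> 0"
  proof (cases "t \<ge> 0")
    case True
    have "Gm 0 \<le> Gm t"
    proof (rule DERIV_nonneg_imp_increasing_open[OF True])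
      fix x assume x: "0 < x" "x < t"
      then have "\<bar>x\<bar> < sg" using t by simp
      moreover have "kf p M x \<ge> 0" unfolding kf_def using g_neg[of x] x t
        by (intro divide_nonneg_pos) auto
      ultimately show "\<exists>y. (Gm has_real_derivative y) (at x) \<and> 0 \<le> y" using dGm by blast
    qed (rule Gm_cont_Icc, use t sg_pos in auto)
    then show ?thesis using Gm0 by simp
  next
    case False
    have "Gm 0 \<le> Gm t"
    proof (rule DERIV_nonpos_imp_decreasing_open[of t 0])
      fix x assume x: "t < x" "x < 0"
      then have "\<bar>x\<bar> < sg" using t False by simp
      moreover have "kf p M x \<le> 0" unfolding kf_def using g_neg[of x] x t False
        by (intro divide_nonpos_pos) auto
      ultimately show "\<exists>y. (Gm has_real_derivative y) (at x) \<and> y \<le> 0" using dGm by blast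
    qed (use False t sg_pos in \<open>auto intro: Gm_cont_Icc\<close>)
    then show ?thesis using Gm0 by simp
  qed
qed

lemma rho_pos: "\<bar>t\<bar> < sg \<Longrightarrow> rho p M Gm t > 0"
  unfolding rho_def using g_neg by (intro divide_pos_pos) auto

definition c0 where "c0 = sqrt 2 * sg / 2"

lemma c0_pos: "c0 > 0" unfolding c0_def using sg_pos by simp

lemma rho_lower: "\<bar>t\<bar> < sg \<Longrightarrow> rho p M Gm t \<ge> c0 / (sg - \<bar>t\<bar>)"
proof -
  assume t: "\<bar>t\<bar> < sg"
  have s1: "s1 p M = sg^2" using sig_facts(2)[OF p M] by simp
  have "\<bar>t\<bar>^2 \<le> sg^2" by (rule power_mono) (use t in auto)
  then have t2: "t^2 \<le> s1 p M" using s1 by simp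
  have gl: "gg p M (t^2) \<ge> t^2 / s1 p M - 1" by (rule gg_chord_low[OF p M]) (use t2 in auto)
  have gn: "gg p M (t^2) < 0" by (rule g_neg[OF t])
  have "- gg p M (t^2) \<le> 1 - t^2 / sg^2" using gl s1 by simp
  also have "1 - t^2/sg^2 = (sg - \<bar>t\<bar>) * (sg + \<bar>t\<bar>) / sg^2" using sg_pos
    by (simp add: field_simps power2_eq_square)
  also have "\<dots> \<le> (sg - \<bar>t\<bar>) * (2 * sg) / sg^2" using t sg_pos
    by (intro divide_right_mono mult_left_mono) auto
  also have "\<dots> = 2 * (sg - \<bar>t\<bar>) / sg" using sg_pos by (simp add: power2_eq_square)
  finally have gb: "- gg p M (t^2) \<le> 2 * (sg - \<bar>t\<bar>) / sg" .
  have e1: "exp ((p-1)/2 * Gm t) \<ge> 1" using Gm_nonneg[OF t] p by simp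
  have "c0 / (sg - \<bar>t\<bar>) = sqrt 2 / (2 * (sg - \<bar>t\<bar>) / sg)" unfolding c0_def using sg_pos t by simp
  also have "\<dots> \<le> sqrt 2 / (- gg p M (t^2))"
  proof (rule divide_left_mono)
    have "2 * (sg - \<bar>t\<bar>) / sg > 0" using t sg_pos by simp
    then show "0 < 2 * (sg - \<bar>t\<bar>) / sg * - gg p M (t\<^sup>2)" using gn by (intro mult_pos_pos) auto
  qed (use gb in auto)
  also have "\<dots> \<le> rho p M Gm t" unfolding rho_def using e1 gn
    by (intro divide_right_mono) auto
  finally show ?thesis .
qed

lemma R_strict: "\<bar>x\<bar> < sg \<Longrightarrow> \<bar>y\<bar> < sg \<Longrightarrow> x < y \<Longrightarrow> R x < R y"
proof -
  assume xy: "\<bar>x\<bar> < sg" "\<bar>y\<bar> < sg" "x < y"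
  show "R x < R y"
  proof (rule DERIV_pos_imp_increasing_open[OF xy(3)])
    fix t assume "x < t" "t < y"
    then have "\<bar>t\<bar> < sg" using xy by auto
    then show "\<exists>d. (R has_real_derivative d) (at t) \<and> 0 < d" using dR rho_pos by blast
  qed (rule R_cont_Icc, use xy in auto)
qed

lemma R_large: "0 \<le> x \<Longrightarrow> x < sg \<Longrightarrow> R x \<ge> c0 * (ln sg - ln (sg - x))"
proof -
  assume x: "0 \<le> x" "x < sg"
  define F where "F t = R t - c0 * (ln sg - ln (sg - t))" for t
  have "F 0 \<le> F x"
  proof (rule DERIV_nonneg_imp_increasing_open[OF x(1)])
    fix t assume t: "0 < t" "t < x"
    then have ta: "\<bar>t\<bar> < sg" using x by simp
    have "(F has_real_derivative rho p M Gm t - c0 * (1 / (sg - t))) (at t)"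
      unfolding F_def using dR[OF ta] t x by (auto intro!: derivative_eq_intros simp: field_simps)
    moreover have "rho p M Gm t - c0 * (1 / (sg - t)) \<ge> 0" using rho_lower[OF ta] t by simp
    ultimately show "\<exists>y. (F has_real_derivative y) (at t) \<and> 0 \<le> y" by blast
  next
    show "continuous_on {0..x} F" unfolding F_def
      using R_cont_Icc[of 0 x] x sg_pos by (intro continuous_intros) auto
  qed
  then show ?thesis unfolding F_def using R0 by simp
qed

lemma R_small: "- sg < x \<Longrightarrow> x \<le> 0 \<Longrightarrow> R x \<le> - c0 * (ln sg - ln (sg + x))"
proof -
  assume x: "- sg < x" "x \<le> 0"
  define F where "F t = R t + c0 * (ln sg - ln (sg + t))" for t
  have "F x \<le> F 0"
  proof (rule DERIV_nonneg_imp_increasing_open[OF x(2)])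
    fix t assume t: "x < t" "t < 0"
    then have ta: "\<bar>t\<bar> < sg" using x by simp
    have "(F has_real_derivative rho p M Gm t - c0 * (1 / (sg + t))) (at t)"
      unfolding F_def using dR[OF ta] t x by (auto intro!: derivative_eq_intros simp: field_simps)
    moreover have "rho p M Gm t - c0 * (1 / (sg + t)) \<ge> 0" using rho_lower[OF ta] t by simp
    ultimately show "\<exists>y. (F has_real_derivative y) (at t) \<and> 0 \<le> y" by blast
  next
    show "continuous_on {x..0} F" unfolding F_def
      using R_cont_Icc[of x 0] x sg_pos by (intro continuous_intros) auto
  qed
  then show ?thesis unfolding F_def using R0 by simp
qed

end


lemma my_inverse_strong:
  fixes f g :: "real \<Rightarrow> real"
  shows "\<lbrakk>DERIV f x :> f'; f' \<noteq> 0; open S; x \<in> S; continuous_on S f;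
         \<And>z. z \<in> S \<Longrightarrow> g (f z) = z\<rbrakk>
         \<Longrightarrow> DERIV g (f x) :> inverse (f')"
  unfolding has_field_derivative_def
  by (rule has_derivative_inverse_strong [of S x f g]) auto

context cB begin

lemma R_surj: "\<exists>x. \<bar>x\<bar> < sg \<and> R x = r"
proof (cases "r \<ge> 0")
  case True
  define x where "x = sg - sg * exp (- r / c0)"
  have e: "exp (- r / c0) \<le> 1" "exp (- r / c0) > 0" using True c0_pos by auto
  have x: "0 \<le> x" "x < sg" unfolding x_def using e sg_pos by (auto simp: algebra_simps)
  have "R x \<ge> c0 * (ln sg - ln (sg - x))" by (rule R_large[OF x])
  also have "ln (sg - x) = ln sg - r / c0" unfolding x_def using sg_pos by (simp add: ln_mult)
  finally have Rx: "R x \<ge> r" using c0_pos by simp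
  obtain y where y: "0 \<le> y" "y \<le> x" "R y = r"
    using IVT'[of R 0 r x] R0 True Rx x R_cont_Icc[of 0 x] sg_pos by auto
  then show ?thesis using x by (intro exI[of _ y]) auto
next
  case False
  define x where "x = - (sg - sg * exp (r / c0))"
  have e: "exp (r / c0) \<le> 1" "exp (r / c0) > 0" using False c0_pos by (auto simp: divide_nonpos_pos)
  have x: "- sg < x" "x \<le> 0" unfolding x_def using e sg_pos by (auto simp: algebra_simps)
  have "R x \<le> - c0 * (ln sg - ln (sg + x))" by (rule R_small[OF x])
  also have "ln (sg + x) = ln sg + r / c0" unfolding x_def using sg_pos by (simp add: ln_mult)
  finally have Rx: "R x \<le> r" using c0_pos by simp
  obtain y where y: "x \<le> y" "y \<le> 0" "R y = r"
    using IVT'[of R x r 0] R0 False Rx x R_cont_Icc[of x 0] sg_pos by auto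
  then show ?thesis using x by (intro exI[of _ y]) auto
qed

lemma R_inj: "\<bar>x\<bar> < sg \<Longrightarrow> \<bar>y\<bar> < sg \<Longrightarrow> R x = R y \<Longrightarrow> x = y"
  using R_strict by (metis less_irrefl linorder_neqE_linordered_idom)

definition Sg where "Sg r = (THE x. \<bar>x\<bar> < sg \<and> R x = r)"

lemma Sg: "\<bar>Sg r\<bar> < sg" "R (Sg r) = r"
proof -
  have "\<exists>!x. \<bar>x\<bar> < sg \<and> R x = r" using R_surj R_inj by blast
  then have "\<bar>Sg r\<bar> < sg \<and> R (Sg r) = r" unfolding Sg_def by (rule theI')
  then show "\<bar>Sg r\<bar> < sg" "R (Sg r) = r" by auto
qed

lemma Sg_R: "\<bar>x\<bar> < sg \<Longrightarrow> Sg (R x) = x"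
  using R_inj Sg by blast

lemma Sg0: "Sg 0 = 0" using Sg_R[of 0] R0 sg_pos by simp

lemma Sg_deriv: "(Sg has_real_derivative inverse (rho p M Gm (Sg r))) (at r)"
proof -
  have d: "(R has_real_derivative rho p M Gm (Sg r)) (at (Sg r))" using dR Sg(1) by blast
  have n: "rho p M Gm (Sg r) \<noteq> 0" using rho_pos Sg(1) by (metis less_irrefl)
  have o: "open {-sg<..<sg}" by simp
  have i: "Sg r \<in> {-sg<..<sg}" using Sg(1)[of r] by (auto simp: abs_less_iff)
  have c: "continuous_on {-sg<..<sg} R"
    by (rule continuous_at_imp_continuous_on) (auto intro!: DERIV_isCont[OF dR])
  have gf: "\<And>z. z \<in> {-sg<..<sg} \<Longrightarrow> Sg (R z) = z" using Sg_R by (auto simp: abs_less_iff)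
  have "(Sg has_real_derivative inverse (rho p M Gm (Sg r))) (at (R (Sg r)))"
    by (rule my_inverse_strong[OF d n o i c gf])
  then show ?thesis using Sg(2) by simp
qed

lemma Sg_isCont: "isCont Sg r" using DERIV_isCont[OF Sg_deriv] .

end


context cB begin

definition uB where "uB r = exp (- Gm (Sg r))"
definition u1B where "u1B r = - sqrt 2 * Sg r * exp (- (p+1)/2 * Gm (Sg r))"
definition u2B where "u2B r = (gg p M ((Sg r)^2) + (p+1) * (Sg r)^2) * exp (- p * Gm (Sg r))"

lemma d_GS: "((\<lambda>r. Gm (Sg r)) has_real_derivative sqrt 2 * Sg r * exp (- (p-1)/2 * Gm (Sg r))) (at r)"
proof -
  define x where "x = Sg r"
  have x: "\<bar>x\<bar> < sg" unfolding x_def using Sg(1) .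
  have g: "gg p M (x^2) < 0" using g_neg[OF x] .
  have d: "((\<lambda>r. Gm (Sg r)) has_real_derivative kf p M x * inverse (rho p M Gm x)) (at r)"
    unfolding x_def by (rule DERIV_chain2[OF dGm[OF Sg(1)] Sg_deriv])
  have s2: "sqrt 2 * sqrt 2 = (2::real)" by simp
  have "kf p M x * inverse (rho p M Gm x) = (2 * x / (- gg p M (x^2))) * ((- gg p M (x^2)) / (sqrt 2 * exp ((p-1)/2 * Gm x)))"
    unfolding kf_def rho_def by (simp add: inverse_eq_divide)
  also have "\<dots> = 2 * x / (sqrt 2 * exp ((p-1)/2 * Gm x))" using g by (simp add: field_simps)
  also have "\<dots> = sqrt 2 * x * inverse (exp ((p-1)/2 * Gm x))"
    using s2 by (simp add: field_simps)
  also have "inverse (exp ((p-1)/2 * Gm x)) = exp (- (p-1)/2 * Gm x)"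
  proof -
    have m: "- (p-1)/2 * Gm x = - ((p-1)/2 * Gm x)" by (metis minus_divide_left mult_minus_left)
    show ?thesis unfolding m exp_minus ..
  qed
  finally show ?thesis using d unfolding x_def by simp
qed

lemma d_Sg: "(Sg has_real_derivative (- gg p M ((Sg r)^2)) * exp (- (p-1)/2 * Gm (Sg r)) / sqrt 2) (at r)"
proof -
  have m: "- (p-1)/2 * Gm (Sg r) = - ((p-1)/2 * Gm (Sg r))" by (metis minus_divide_left mult_minus_left)
  have "inverse (rho p M Gm (Sg r)) = (- gg p M ((Sg r)^2)) * inverse (exp ((p-1)/2 * Gm (Sg r))) / sqrt 2"
    unfolding rho_def by (simp add: inverse_eq_divide)
  also have "inverse (exp ((p-1)/2 * Gm (Sg r))) = exp (- (p-1)/2 * Gm (Sg r))"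
    unfolding m exp_minus ..
  finally have "inverse (rho p M Gm (Sg r)) = (- gg p M ((Sg r)^2)) * exp (- (p-1)/2 * Gm (Sg r)) / sqrt 2" .
  then show ?thesis using Sg_deriv[of r] by simp
qed

lemma d_uB: "(uB has_real_derivative u1B r) (at r)"
proof -
  have "(uB has_real_derivative exp (- Gm (Sg r)) * (- (sqrt 2 * Sg r * exp (- (p-1)/2 * Gm (Sg r))))) (at r)"
    unfolding uB_def[abs_def] by (auto intro!: derivative_eq_intros d_GS)
  moreover have "exp (- Gm (Sg r)) * (- (sqrt 2 * Sg r * exp (- (p-1)/2 * Gm (Sg r)))) = u1B r"
  proof -
    have "exp (- Gm (Sg r)) * exp (- (p-1)/2 * Gm (Sg r)) = exp (- (p+1)/2 * Gm (Sg r))"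
      by (simp flip: exp_add add: field_simps)
    then show ?thesis unfolding u1B_def by (simp add: algebra_simps)
  qed
  ultimately show ?thesis by simp
qed

lemma d_u1B: "(u1B has_real_derivative u2B r) (at r)"
proof -
  define x where "x = Sg r"
  define G where "G = Gm x"
  define A where "A = exp (- (p-1)/2 * G)"
  define E where "E = exp (- (p+1)/2 * G)"
  define gx where "gx = gg p M (x^2)"
  have AE: "A * E = exp (- p * G)" unfolding A_def E_def by (simp flip: exp_add add: field_simps)
  have s2: "sqrt 2 * sqrt 2 = (2::real)" by simp
  have "(u1B has_real_derivative
      - sqrt 2 * ((- gx) * A / sqrt 2) * E + (- sqrt 2 * x) * (E * (- (p+1)/2 * (sqrt 2 * x * A)))) (at r)"
    unfolding u1B_def[abs_def] x_def G_def A_def E_def gx_def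
    by (auto intro!: derivative_eq_intros d_GS d_Sg)
  moreover have "- sqrt 2 * ((- gx) * A / sqrt 2) * E + (- sqrt 2 * x) * (E * (- (p+1)/2 * (sqrt 2 * x * A)))
      = (gx + (p+1) * x^2) * (A * E)"
  proof -
    have "- sqrt 2 * ((- gx) * A / sqrt 2) * E = gx * (A * E)" by simp
    moreover have "(- sqrt 2 * x) * (E * (- (p+1)/2 * (sqrt 2 * x * A))) = (sqrt 2 * sqrt 2) * (p+1)/2 * x^2 * (A * E)"
      by (simp add: algebra_simps power2_eq_square)
    ultimately show ?thesis unfolding s2 by (simp add: algebra_simps)
  qed
  moreover have "(gx + (p+1) * x^2) * (A * E) = u2B r" unfolding AE u2B_def x_def gx_def G_def ..
  ultimately show ?thesis by simp
qed

lemma u2B_cont: "continuous_on {0..} u2B"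
proof (rule continuous_at_imp_continuous_on, intro ballI)
  fix r :: real
  have c1: "isCont (\<lambda>r. Gm (Sg r)) r" using DERIV_isCont[OF d_GS] .
  have c2: "isCont (\<lambda>r. gg p M ((Sg r)^2)) r"
    using continuous_at_compose[OF Sg_isCont gg_isCont_sq[OF p]] by (simp add: o_def)
  show "isCont u2B r" unfolding u2B_def[abs_def]
    using c1 c2 Sg_isCont by (auto intro!: continuous_intros)
qed

lemma eqB: "- u2B r = \<bar>uB r\<bar> powr (p-1) * uB r + M * \<bar>u1B r\<bar> powr (2*p/(p+1))"
proof -
  define x where "x = Sg r"
  define G where "G = Gm x"
  have e1: "\<bar>uB r\<bar> powr (p-1) * uB r = exp (- p * G)"
    unfolding uB_def x_def[symmetric] G_def[symmetric]
    by (simp add: exp_powr_real flip: exp_add) (simp add: algebra_simps)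
  have "\<bar>u1B r\<bar> = (sqrt 2 * \<bar>x\<bar>) * exp (- (p+1)/2 * G)"
    unfolding u1B_def x_def[symmetric] G_def[symmetric] by (simp add: abs_mult)
  then have "\<bar>u1B r\<bar> powr (2*p/(p+1)) = (sqrt 2 * \<bar>x\<bar>) powr (2*p/(p+1)) * exp (- (p+1)/2 * G) powr (2*p/(p+1))"
    by (simp add: powr_mult)
  also have "exp (- (p+1)/2 * G) powr (2*p/(p+1)) = exp (- p * G)"
    unfolding exp_powr_real using p by (simp add: field_simps)
  also have "(sqrt 2 * \<bar>x\<bar>) powr (2*p/(p+1)) = (2 * x^2) powr (p/(p+1))"
  proof -
    have ex: "2 * (p/(p+1)) = 2*p/(p+1)" by simp
    have "(sqrt 2 * \<bar>x\<bar>) powr (2*p/(p+1)) = ((sqrt 2 * \<bar>x\<bar>) powr 2) powr (p/(p+1))"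
      unfolding powr_powr ex ..
    also have "(sqrt 2 * \<bar>x\<bar>) powr 2 = 2 * x^2" by (simp add: power_mult_distrib)
    finally show ?thesis .
  qed
  finally have e2: "\<bar>u1B r\<bar> powr (2*p/(p+1)) = (2 * x^2) powr (p/(p+1)) * exp (- p * G)" .
  have "- u2B r = (M * (2 * x^2) powr (p/(p+1)) + 1) * exp (- p * G)"
    unfolding u2B_def x_def[symmetric] G_def[symmetric] gg_def by (simp add: algebra_simps)
  also have "\<dots> = \<bar>uB r\<bar> powr (p-1) * uB r + M * \<bar>u1B r\<bar> powr (2*p/(p+1))"
    unfolding e1 e2 by (simp add: algebra_simps)
  finally show ?thesis .
qed

lemma ground_state_B: "ground_state p M uB"
  unfolding ground_state_def
proof (rule exI[of _ u1B], rule exI[of _ u2B], intro conjI allI impI)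
  fix r :: real
  show "(uB has_real_derivative u1B r) (at r within {0..})" by (rule has_field_derivative_at_within[OF d_uB])
  show "(u1B has_real_derivative u2B r) (at r within {0..})" by (rule has_field_derivative_at_within[OF d_u1B])
  show "uB r \<ge> 0" unfolding uB_def by simp
  show "- u2B r = \<bar>uB r\<bar> powr (p-1) * uB r + M * \<bar>u1B r\<bar> powr (2*p/(p+1))" by (rule eqB)
next
  show "continuous_on {0..} u2B" by (rule u2B_cont)
  show "u1B 0 = 0" unfolding u1B_def Sg0 by simp
  show "\<exists>r\<ge>0. uB r \<noteq> 0" unfolding uB_def by auto
qed

end

lemma ground_state_exists:
  assumes p: "p > 1" and M: "M \<le> - mu_star1 p"
  shows "\<exists>u. ground_state p M u"
  using cB_exists[OF p M] cB.ground_state_B by blast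


lemma gg_isCont_pos: "p > 1 \<Longrightarrow> s > 0 \<Longrightarrow> isCont (gg p M) s"
proof -
  assume p: "p > 1" and s: "s > 0"
  have "continuous_on {0<..} (gg p M)" by (rule continuous_on_subset[OF gg_cont[OF p]]) auto
  then show ?thesis using s by (simp add: continuous_on_eq_continuous_at)
qed

definition smid :: "real \<Rightarrow> real \<Rightarrow> real" where "smid p M = (s1 p M + s2 p M) / 2"

lemma D_facts:
  assumes p: "p > 1" and M: "M < - mu_star1 p"
  shows "0 < s1 p M" "s1 p M < smid p M" "smid p M < s2 p M"
    "\<And>s. s1 p M < s \<Longrightarrow> s < s2 p M \<Longrightarrow> gg p M s > 0"
proof -
  have Mle: "M \<le> - mu_star1 p" using M by simp
  show "0 < s1 p M" by (rule s1_props(1)[OF p Mle])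
  have "s1 p M < s2 p M" using gg_pos_between(1,2)[OF p M] by simp
  then show "s1 p M < smid p M" "smid p M < s2 p M" unfolding smid_def by auto
  show "\<And>s. s1 p M < s \<Longrightarrow> s < s2 p M \<Longrightarrow> gg p M s > 0" by (rule gg_pos_between(3)[OF p M])
qed

locale cD0 =
  fixes p M :: real and H :: "real \<Rightarrow> real"
  assumes p: "p > 1" and M: "M < - mu_star1 p"
    and dH: "\<And>s. s1 p M < s \<Longrightarrow> s < s2 p M \<Longrightarrow> (H has_real_derivative - 1 / (aa p * gg p M s)) (at s)"
    and H0: "H (smid p M) = 0"

lemma cD0_exists:
  assumes p: "p > 1" and M: "M < - mu_star1 p"
  shows "\<exists>H. cD0 p M H"
proof -
  note F = D_facts[OF p M]
  have c: "\<And>x. s1 p M < x \<Longrightarrow> x < s2 p M \<Longrightarrow> isCont (\<lambda>s. - 1 / (aa p * gg p M s)) x"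
  proof -
    fix x assume x: "s1 p M < x" "x < s2 p M"
    have "gg p M x > 0" using F(4) x .
    moreover have "x > 0" using x F(1) by simp
    ultimately show "isCont (\<lambda>s. - 1 / (aa p * gg p M s)) x"
      using gg_isCont_pos[OF p] aa_pos[OF p] by (auto intro!: continuous_intros)
  qed
  obtain H where "\<And>x. s1 p M < x \<Longrightarrow> x < s2 p M \<Longrightarrow> (H has_real_derivative - 1 / (aa p * gg p M x)) (at x)"
    "H (smid p M) = 0"
    using antideriv_open[of "s1 p M" "smid p M" "s2 p M" "\<lambda>s. - 1 / (aa p * gg p M s)"] F(2,3) c by auto
  then have "cD0 p M H" by unfold_locales (use p M in auto)
  then show ?thesis by blast
qed

context cD0 begin

abbreviation "a \<equiv> aa p"
abbreviation "S1 \<equiv> s1 p M"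
abbreviation "S2 \<equiv> s2 p M"
abbreviation "Sm \<equiv> smid p M"

lemma Mle: "M \<le> - mu_star1 p" using M by simp
lemma a_pos: "a > 0" using aa_pos[OF p] .
lemma F1: "0 < S1" "S1 < Sm" "Sm < S2" using D_facts[OF p M] by auto
lemma gpos: "S1 < s \<Longrightarrow> s < S2 \<Longrightarrow> gg p M s > 0" using D_facts(4)[OF p M] .

lemma H_cont: "S1 < x \<Longrightarrow> y < S2 \<Longrightarrow> continuous_on {x..y} H"
  by (rule continuous_at_imp_continuous_on) (auto intro!: DERIV_isCont[OF dH])

lemma H_strict: "S1 < x \<Longrightarrow> x < y \<Longrightarrow> y < S2 \<Longrightarrow> H y < H x"
proof -
  assume xy: "S1 < x" "x < y" "y < S2"
  show "H y < H x"
  proof (rule DERIV_neg_imp_decreasing_open[OF xy(2)])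
    fix t assume t: "x < t" "t < y"
    have "- 1 / (a * gg p M t) < 0" using gpos[of t] t xy a_pos by (simp add: divide_neg_pos)
    then show "\<exists>d. (H has_real_derivative d) (at t) \<and> d < 0" using dH[of t] t xy by auto
  qed (rule H_cont, use xy in auto)
qed

lemma H_near_s1:
  obtains L where "L > 0" "\<And>s. S1 < s \<Longrightarrow> s \<le> Sm \<Longrightarrow> H s \<ge> (1/(a*L)) * (ln (Sm - S1) - ln (s - S1))"
proof -
  obtain L where L: "L > 0" "\<And>s. S1 \<le> s \<Longrightarrow> gg p M s \<le> L * (s - S1)"
    using gg_upper_s1[OF p Mle] by auto
  show ?thesis
  proof (rule that[OF L(1)])
    fix s assume s: "S1 < s" "s \<le> Sm"
    define F where "F t = H t - (1/(a*L)) * (ln (Sm - S1) - ln (t - S1))" for t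
    have "F Sm \<le> F s"
    proof (rule DERIV_nonpos_imp_decreasing_open[OF s(2)])
      fix t assume t: "s < t" "t < Sm"
      then have t1: "S1 < t" "t < S2" using s F1 by auto
      have dl: "((\<lambda>t. ln (t - S1)) has_real_derivative 1 / (t - S1)) (at t)"
        using t1 by (auto intro!: derivative_eq_intros simp: divide_inverse)
      have d: "(F has_real_derivative - 1 / (a * gg p M t) - (1/(a*L)) * (0 - 1 / (t - S1))) (at t)"
        unfolding F_def by (rule DERIV_diff[OF dH[OF t1] DERIV_cmult[OF DERIV_diff[OF DERIV_const dl]]])
      have g: "0 < gg p M t" "gg p M t \<le> L * (t - S1)" using gpos[OF t1] L(2)[of t] t1 by auto
      have ag: "0 < a * gg p M t" using g a_pos by simp
      have agl: "a * gg p M t \<le> a * L * (t - S1)" using g a_pos by (simp add: mult.assoc)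
      have i: "1 / (a * L * (t - S1)) \<le> 1 / (a * gg p M t)"
        by (rule divide_left_mono[OF agl]) (use ag agl in auto)
      have e: "(1/(a*L)) * (0 - 1 / (t - S1)) = - (1 / (a * L * (t - S1)))" by simp
      have "- 1 / (a * gg p M t) - (1/(a*L)) * (0 - 1 / (t - S1)) \<le> 0"
        unfolding e using i by simp
      then show "\<exists>y. (F has_real_derivative y) (at t) \<and> y \<le> 0" using d by blast
    next
      show "continuous_on {s..Sm} F" unfolding F_def
        using H_cont[of s Sm] s F1 by (intro continuous_intros) auto
    qed
    then show "H s \<ge> (1/(a*L)) * (ln (Sm - S1) - ln (s - S1))" unfolding F_def using H0 by simp
  qed
qed

lemma H_near_s2:
  obtains L where "L > 0" "\<And>s. Sm \<le> s \<Longrightarrow> s < S2 \<Longrightarrow> H s \<le> - (1/(a*L)) * (ln (S2 - Sm) - ln (S2 - s))"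
proof -
  obtain L where L: "L > 0" "\<And>s. 0 \<le> s \<Longrightarrow> s \<le> S2 \<Longrightarrow> gg p M s \<le> L * (S2 - s)"
    using gg_upper_s2[OF p Mle] by auto
  show ?thesis
  proof (rule that[OF L(1)])
    fix s assume s: "Sm \<le> s" "s < S2"
    define F where "F t = H t + (1/(a*L)) * (ln (S2 - Sm) - ln (S2 - t))" for t
    have "F s \<le> F Sm"
    proof (rule DERIV_nonpos_imp_decreasing_open[OF s(1)])
      fix t assume t: "Sm < t" "t < s"
      then have t1: "S1 < t" "t < S2" using s F1 by auto
      have dl: "((\<lambda>t. ln (S2 - t)) has_real_derivative - 1 / (S2 - t)) (at t)"
        using t1 by (auto intro!: derivative_eq_intros simp: divide_inverse)
      have d: "(F has_real_derivative - 1 / (a * gg p M t) + (1/(a*L)) * (0 - - 1 / (S2 - t))) (at t)"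
        unfolding F_def by (rule DERIV_add[OF dH[OF t1] DERIV_cmult[OF DERIV_diff[OF DERIV_const dl]]])
      have g: "0 < gg p M t" "gg p M t \<le> L * (S2 - t)" using gpos[OF t1] L(2)[of t] t1 F1 by auto
      have ag: "0 < a * gg p M t" using g a_pos by simp
      have agl: "a * gg p M t \<le> a * L * (S2 - t)" using g a_pos by (simp add: mult.assoc)
      have i: "1 / (a * L * (S2 - t)) \<le> 1 / (a * gg p M t)"
        by (rule divide_left_mono[OF agl]) (use ag agl in auto)
      have e: "(1/(a*L)) * (0 - - 1 / (S2 - t)) = 1 / (a * L * (S2 - t))" by simp
      have "- 1 / (a * gg p M t) + (1/(a*L)) * (0 - - 1 / (S2 - t)) \<le> 0"
        unfolding e using i by simp
      then show "\<exists>y. (F has_real_derivative y) (at t) \<and> y \<le> 0" using d by blast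
    next
      show "continuous_on {Sm..s} F" unfolding F_def
        using H_cont[of Sm s] s F1 by (intro continuous_intros) auto
    qed
    then show "H s \<le> - (1/(a*L)) * (ln (S2 - Sm) - ln (S2 - s))" unfolding F_def using H0 by simp
  qed
qed

end


context cD0 begin

lemma H_surj: "\<exists>s. S1 < s \<and> s < S2 \<and> H s = tau"
proof (cases "tau \<ge> 0")
  case True
  obtain L where L: "L > 0" "\<And>s. S1 < s \<Longrightarrow> s \<le> Sm \<Longrightarrow> H s \<ge> (1/(a*L)) * (ln (Sm - S1) - ln (s - S1))"
    using H_near_s1 by blast
  define s where "s = S1 + (Sm - S1) * exp (- (a * L) * tau)"
  have e: "exp (- (a * L) * tau) \<le> 1" "exp (- (a * L) * tau) > 0" using True L a_pos by auto
  have "(Sm - S1) * exp (- (a * L) * tau) \<le> Sm - S1" using mult_left_mono[OF e(1), of "Sm - S1"] F1 by simp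
  moreover have "(Sm - S1) * exp (- (a * L) * tau) > 0" using e F1 by simp
  ultimately have s: "S1 < s" "s \<le> Sm" unfolding s_def by linarith+
  have "H s \<ge> (1/(a*L)) * (ln (Sm - S1) - ln (s - S1))" using L(2) s by simp
  also have "ln (s - S1) = ln (Sm - S1) - (a * L) * tau" unfolding s_def using F1 by (simp add: ln_mult)
  finally have Hs: "H s \<ge> tau" using L a_pos by simp
  obtain y where y: "s \<le> y" "y \<le> Sm" "H y = tau"
    using IVT2'[of H Sm tau s] H0 True Hs s H_cont[of s Sm] F1 by auto
  then show ?thesis using s F1 by (intro exI[of _ y]) auto
next
  case False
  obtain L where L: "L > 0" "\<And>s. Sm \<le> s \<Longrightarrow> s < S2 \<Longrightarrow> H s \<le> - (1/(a*L)) * (ln (S2 - Sm) - ln (S2 - s))"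
    using H_near_s2 by blast
  define s where "s = S2 - (S2 - Sm) * exp ((a * L) * tau)"
  have e: "exp ((a * L) * tau) \<le> 1" "exp ((a * L) * tau) > 0" using False L a_pos
    by (auto simp: mult_nonneg_nonpos)
  have "(S2 - Sm) * exp ((a * L) * tau) \<le> S2 - Sm" using mult_left_mono[OF e(1), of "S2 - Sm"] F1 by simp
  moreover have "(S2 - Sm) * exp ((a * L) * tau) > 0" using e F1 by simp
  ultimately have s: "Sm \<le> s" "s < S2" unfolding s_def by linarith+
  have "H s \<le> - (1/(a*L)) * (ln (S2 - Sm) - ln (S2 - s))" using L(2) s by simp
  also have "ln (S2 - s) = ln (S2 - Sm) + (a * L) * tau" unfolding s_def using F1 by (simp add: ln_mult)
  finally have Hs: "H s \<le> tau" using L a_pos by simp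
  obtain y where y: "Sm \<le> y" "y \<le> s" "H y = tau"
    using IVT2'[of H s tau Sm] H0 False Hs s H_cont[of Sm s] F1 by auto
  then show ?thesis using s F1 by (intro exI[of _ y]) auto
qed

lemma H_inj: "S1 < x \<Longrightarrow> x < S2 \<Longrightarrow> S1 < y \<Longrightarrow> y < S2 \<Longrightarrow> H x = H y \<Longrightarrow> x = y"
  using H_strict by (metis less_irrefl linorder_neqE_linordered_idom)

definition Sx where "Sx tau = (THE s. S1 < s \<and> s < S2 \<and> H s = tau)"

lemma Sx: "S1 < Sx tau" "Sx tau < S2" "H (Sx tau) = tau"
proof -
  have "\<exists>!s. S1 < s \<and> s < S2 \<and> H s = tau" using H_surj H_inj by blast
  then have "S1 < Sx tau \<and> Sx tau < S2 \<and> H (Sx tau) = tau" unfolding Sx_def by (rule theI')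
  then show "S1 < Sx tau" "Sx tau < S2" "H (Sx tau) = tau" by auto
qed

lemma Sx_H: "S1 < x \<Longrightarrow> x < S2 \<Longrightarrow> Sx (H x) = x"
  using H_inj Sx by blast

lemma Sx_deriv: "(Sx has_real_derivative - a * gg p M (Sx tau)) (at tau)"
proof -
  have g: "gg p M (Sx tau) > 0" using gpos Sx by blast
  have d: "(H has_real_derivative - 1 / (a * gg p M (Sx tau))) (at (Sx tau))" using dH Sx by blast
  have n: "- 1 / (a * gg p M (Sx tau)) \<noteq> 0" using g a_pos by simp
  have o: "open {S1<..<S2}" by simp
  have i: "Sx tau \<in> {S1<..<S2}" using Sx[of tau] by auto
  have c: "continuous_on {S1<..<S2} H"
    by (rule continuous_at_imp_continuous_on) (auto intro!: DERIV_isCont[OF dH])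
  have gf: "\<And>z. z \<in> {S1<..<S2} \<Longrightarrow> Sx (H z) = z" using Sx_H by auto
  have "(Sx has_real_derivative inverse (- 1 / (a * gg p M (Sx tau)))) (at (H (Sx tau)))"
    by (rule my_inverse_strong[OF d n o i c gf])
  moreover have "inverse (- 1 / (a * gg p M (Sx tau))) = - a * gg p M (Sx tau)" by simp
  ultimately show ?thesis using Sx(3)[of tau] by simp
qed

lemma Sx_isCont: "isCont Sx tau" using DERIV_isCont[OF Sx_deriv] .

lemma Sx_decr: "t1 < t2 \<Longrightarrow> Sx t2 < Sx t1"
proof (rule ccontr)
  assume t: "t1 < t2" and "\<not> Sx t2 < Sx t1"
  then have "Sx t1 \<le> Sx t2" by simp
  then have "H (Sx t2) \<le> H (Sx t1)"
    using H_strict[of "Sx t1" "Sx t2"] Sx by (cases "Sx t1 = Sx t2") (auto simp: less_imp_le)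
  then show False using Sx(3) t by simp
qed

lemma Sx_top: "(Sx \<longlongrightarrow> S1) at_top"
proof (rule order_tendstoI)
  fix b assume "b < S1" then show "eventually (\<lambda>t. b < Sx t) at_top" using Sx(1) by (auto intro: less_trans always_eventually)
next
  fix b assume b: "b > S1"
  show "eventually (\<lambda>t. Sx t < b) at_top"
  proof (cases "b < S2")
    case True
    show ?thesis
    proof (rule eventually_at_top_linorderI[of "H b + 1"])
      fix t assume "t \<ge> H b + 1"
      then have "H b < t" by simp
      then have "Sx t < Sx (H b)" by (rule Sx_decr)
      then show "Sx t < b" using Sx_H[of b] b True by simp
    qed
  next
    case False
    have "\<And>t. Sx t < b" using Sx(2) False by (meson less_le_trans not_less)
    then show ?thesis by simp
  qed
qed

lemma Sx_bot: "(Sx \<longlongrightarrow> S2) at_bot"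
proof (rule order_tendstoI)
  fix b assume "b > S2" then show "eventually (\<lambda>t. Sx t < b) at_bot" using Sx(2) by (auto intro: less_trans always_eventually)
next
  fix b assume b: "b < S2"
  show "eventually (\<lambda>t. b < Sx t) at_bot"
  proof (cases "b > S1")
    case True
    show ?thesis
    proof (rule eventually_at_bot_linorderI[of "H b - 1"])
      fix t assume "t \<le> H b - 1"
      then have "t < H b" by simp
      then have "Sx (H b) < Sx t" by (rule Sx_decr)
      then show "b < Sx t" using Sx_H[of b] b True by simp
    qed
  next
    case False
    have "\<And>t. b < Sx t" using Sx(1) False by (meson le_less_trans not_less)
    then show ?thesis by simp
  qed
qed

end


context cD0 begin

definition sw where "sw w = (if w > 0 then Sx (ln w) else S2)"

lemma sw_bounds: "S1 < sw w" "sw w \<le> S2"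
  unfolding sw_def using Sx F1 by (auto simp: less_imp_le)

lemma sw_pos: "sw w > 0" using sw_bounds(1)[of w] F1 by simp

lemma sw_isCont: "isCont sw w"
proof -
  consider "w > 0" | "w < 0" | "w = 0" by linarith
  then show ?thesis
  proof cases
    case 1
    have "isCont (\<lambda>w. Sx (ln w)) w"
      using 1 by (intro continuous_at_compose[of _ ln Sx, unfolded o_def] continuous_intros Sx_isCont) auto
    moreover have "eventually (\<lambda>x. sw x = Sx (ln x)) (nhds w)"
      using eventually_nhds_in_open[of "{0<..}" w] 1 unfolding sw_def by (auto elim!: eventually_mono)
    ultimately show ?thesis using isCont_cong[of sw "\<lambda>x. Sx (ln x)" w] by simp
  next
    case 2
    have "eventually (\<lambda>x. sw x = S2) (nhds w)"
      using eventually_nhds_in_open[of "{..<0}" w] 2 unfolding sw_def by (auto elim!: eventually_mono)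
    then show ?thesis using isCont_cong[of sw "\<lambda>x. S2" w] by simp
  next
    case 3
    have r: "((\<lambda>w. Sx (ln w)) \<longlongrightarrow> S2) (at_right 0)"
      by (rule filterlim_compose[OF Sx_bot ln_at_0])
    have r': "(sw \<longlongrightarrow> S2) (at_right 0)"
    proof (rule Lim_transform_eventually[OF r])
      show "eventually (\<lambda>x. Sx (ln x) = sw x) (at_right 0)"
        unfolding sw_def by (auto simp: eventually_at_right_field intro: exI[of _ 1])
    qed
    have l': "(sw \<longlongrightarrow> S2) (at_left 0)"
    proof (rule Lim_transform_eventually[OF tendsto_const[of S2]])
      show "eventually (\<lambda>x. S2 = sw x) (at_left 0)"
        unfolding sw_def by (auto simp: eventually_at_left_field intro: exI[of _ "-1"])
    qed
    have "(sw \<longlongrightarrow> S2) (at 0)" using r' l' by (simp add: filterlim_at_split)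
    then show ?thesis using 3 unfolding isCont_def sw_def by simp
  qed
qed

lemma sw_deriv: "w > 0 \<Longrightarrow> (sw has_real_derivative - a * gg p M (sw w) / w) (at w)"
proof -
  assume w: "w > 0"
  have d: "((\<lambda>w. Sx (ln w)) has_real_derivative (- a * gg p M (Sx (ln w))) * inverse w) (at w)"
    by (rule DERIV_chain2[OF Sx_deriv]) (use w in \<open>auto intro!: derivative_eq_intros simp: inverse_eq_divide\<close>)
  have ev: "eventually (\<lambda>x. sw x = Sx (ln x)) (nhds w)"
    using eventually_nhds_in_open[of "{0<..}" w] w unfolding sw_def by (auto elim!: eventually_mono)
  have "(sw has_real_derivative (- a * gg p M (Sx (ln w))) * inverse w) (at w)"
    using d DERIV_cong_ev[OF refl ev refl] by simp
  then show ?thesis using w unfolding sw_def by (simp add: field_simps)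
qed

lemma sw_top: "(sw \<longlongrightarrow> S1) at_top"
proof (rule Lim_transform_eventually[OF filterlim_compose[OF Sx_top ln_at_top]])
  show "eventually (\<lambda>x. Sx (ln x) = sw x) at_top"
    unfolding sw_def by (intro eventually_at_top_linorderI[of 1]) auto
qed

definition ff where "ff w = a / sqrt (2 * sw w)"

lemma ff_pos: "ff w > 0" unfolding ff_def using a_pos sw_pos by simp

lemma sw_nz: "sw w \<noteq> 0" using sw_pos[of w] by simp

lemma ff_isCont: "isCont ff w"
  unfolding ff_def[abs_def] using sw_isCont by (auto intro!: continuous_intros simp: sw_nz)

lemma ff_lower: "ff w \<ge> a / sqrt (2 * S2)"
  unfolding ff_def using a_pos sw_bounds[of w] sw_pos[of w] F1
  by (intro divide_left_mono) (auto intro!: mult_pos_pos)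

lemma ff_upper: "ff w \<le> a / sqrt (2 * S1)"
  unfolding ff_def using a_pos sw_bounds[of w] sw_pos[of w] F1
  by (intro divide_left_mono) (auto simp: less_imp_le intro!: mult_pos_pos)

lemma Rw_exists: "\<exists>Rw. (\<forall>w. (Rw has_real_derivative ff w) (at w)) \<and> Rw 0 = 0"
  using antideriv_UNIV[of ff] ff_isCont by metis

end

locale cD = cD0 +
  fixes Rw :: "real \<Rightarrow> real"
  assumes dRw: "\<And>w. (Rw has_real_derivative ff w) (at w)"
    and Rw0: "Rw 0 = 0"

lemma cD_exists:
  assumes p: "p > 1" and M: "M < - mu_star1 p"
  shows "\<exists>H Rw. cD p M H Rw"
proof -
  obtain H where H: "cD0 p M H" using cD0_exists[OF p M] by auto
  then obtain Rw where "\<forall>w. (Rw has_real_derivative cD0.ff p M H w) (at w)" "Rw 0 = 0"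
    using cD0.Rw_exists by blast
  then have "cD p M H Rw" using H by (simp add: cD_def cD_axioms_def)
  then show ?thesis by blast
qed


context cD begin

definition cl where "cl = a / sqrt (2 * S2)"
definition cu where "cu = a / sqrt (2 * S1)"

lemma cl_pos: "cl > 0" unfolding cl_def using a_pos F1 by simp
lemma cu_pos: "cu > 0" unfolding cu_def using a_pos F1 by simp
lemma ffl: "ff w \<ge> cl" unfolding cl_def by (rule ff_lower)
lemma ffu: "ff w \<le> cu" unfolding cu_def by (rule ff_upper)
lemma ff_nz: "ff w \<noteq> 0" using ff_pos[of w] by simp

lemma Rw_cont: "continuous_on A Rw"
  by (rule continuous_at_imp_continuous_on) (auto intro!: DERIV_isCont[OF dRw])

lemma Rw_strict: "x < y \<Longrightarrow> Rw x < Rw y"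
  by (rule DERIV_pos_imp_increasing_open) (use dRw ff_pos Rw_cont in blast)+

lemma Rw_ge: "w \<ge> 0 \<Longrightarrow> Rw w \<ge> cl * w"
proof -
  assume w: "w \<ge> 0"
  have "(\<lambda>w. Rw w - cl * w) 0 \<le> (\<lambda>w. Rw w - cl * w) w"
  proof (rule DERIV_nonneg_imp_increasing_open[OF w])
    fix x :: real
    have "((\<lambda>w. Rw w - cl * w) has_real_derivative ff x - cl) (at x)"
      using dRw[of x] by (auto intro!: derivative_eq_intros)
    then show "\<exists>y. ((\<lambda>w. Rw w - cl * w) has_real_derivative y) (at x) \<and> 0 \<le> y"
      using ffl[of x] by auto
  qed (intro continuous_intros Rw_cont)
  then show ?thesis using Rw0 by simp
qed

lemma Rw_le_neg: "w \<le> 0 \<Longrightarrow> Rw w \<le> cl * w"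
proof -
  assume w: "w \<le> 0"
  have "(\<lambda>w. Rw w - cl * w) w \<le> (\<lambda>w. Rw w - cl * w) 0"
  proof (rule DERIV_nonneg_imp_increasing_open[OF w])
    fix x :: real
    have "((\<lambda>w. Rw w - cl * w) has_real_derivative ff x - cl) (at x)"
      using dRw[of x] by (auto intro!: derivative_eq_intros)
    then show "\<exists>y. ((\<lambda>w. Rw w - cl * w) has_real_derivative y) (at x) \<and> 0 \<le> y"
      using ffl[of x] by auto
  qed (intro continuous_intros Rw_cont)
  then show ?thesis using Rw0 by simp
qed

lemma Rw_le: "w \<ge> 0 \<Longrightarrow> Rw w \<le> cu * w"
proof -
  assume w: "w \<ge> 0"
  have "(\<lambda>w. Rw w - cu * w) w \<le> (\<lambda>w. Rw w - cu * w) 0"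
  proof (rule DERIV_nonpos_imp_decreasing_open[OF w])
    fix x :: real
    have "((\<lambda>w. Rw w - cu * w) has_real_derivative ff x - cu) (at x)"
      using dRw[of x] by (auto intro!: derivative_eq_intros)
    then show "\<exists>y. ((\<lambda>w. Rw w - cu * w) has_real_derivative y) (at x) \<and> y \<le> 0"
      using ffu[of x] by auto
  qed (intro continuous_intros Rw_cont)
  then show ?thesis using Rw0 by simp
qed

lemma Rw_surj: "\<exists>w. Rw w = r"
proof (cases "r \<ge> 0")
  case True
  have "Rw (r / cl) \<ge> r" using Rw_ge[of "r / cl"] True cl_pos by simp
  then obtain w where "0 \<le> w" "w \<le> r / cl" "Rw w = r"
    using IVT'[of Rw 0 r "r / cl"] Rw0 True cl_pos Rw_cont by auto
  then show ?thesis by blast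
next
  case False
  have "Rw (r / cl) \<le> r" using Rw_le_neg[of "r / cl"] False cl_pos by (simp add: divide_nonpos_pos)
  then obtain w where "r / cl \<le> w" "w \<le> 0" "Rw w = r"
    using IVT'[of Rw "r / cl" r 0] Rw0 False cl_pos Rw_cont by (auto simp: divide_nonpos_pos)
  then show ?thesis by blast
qed

lemma Rw_inj: "Rw x = Rw y \<Longrightarrow> x = y"
  using Rw_strict by (metis less_irrefl linorder_neqE_linordered_idom)

definition W where "W r = (THE w. Rw w = r)"

lemma RW: "Rw (W r) = r"
proof -
  have "\<exists>!w. Rw w = r" using Rw_surj Rw_inj by blast
  then show ?thesis unfolding W_def by (rule theI')
qed

lemma WR: "W (Rw w) = w" using RW Rw_inj by blast

lemma W0: "W 0 = 0" using WR[of 0] Rw0 by simp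

lemma W_deriv: "(W has_real_derivative inverse (ff (W r))) (at r)"
proof -
  have "(W has_real_derivative inverse (ff (W r))) (at (Rw (W r)))"
    by (rule my_inverse_strong[OF dRw _ open_UNIV UNIV_I Rw_cont]) (use ff_nz WR in auto)
  then show ?thesis using RW by simp
qed

lemma W_deriv': "(W has_real_derivative sqrt (2 * sw (W r)) / a) (at r)"
  using W_deriv[of r] unfolding ff_def by (simp add: inverse_eq_divide)

lemma W_isCont: "isCont W r" using DERIV_isCont[OF W_deriv] .

lemma W_pos: "r > 0 \<Longrightarrow> W r > 0"
proof (rule ccontr)
  assume r: "r > 0" and "\<not> W r > 0"
  then have "W r \<le> 0" by simp
  then have "Rw (W r) \<le> Rw 0" using Rw_strict[of "W r" 0] by (cases "W r = 0") auto
  then show False using RW r Rw0 by simp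
qed

lemma W_ge: "r \<ge> 0 \<Longrightarrow> W r \<ge> r / cu"
proof -
  assume r: "r \<ge> 0"
  have W0': "W r \<ge> 0" using W_pos[of r] r W0 by (cases "r = 0") auto
  have "r \<le> cu * W r" using Rw_le[OF W0'] RW by simp
  then show ?thesis using cu_pos by (simp add: pos_divide_le_eq mult.commute)
qed

end


context cD begin

definition uD where "uD r = W r powr (- a)"
definition u1D where "u1D r = - (W r powr (- a - 1) * sqrt (2 * sw (W r)))"
definition u2D where "u2D r = (gg p M (sw (W r)) + (p+1) * sw (W r)) * W r powr (- a - 2)"

lemma d_uD: "r > 0 \<Longrightarrow> (uD has_real_derivative u1D r) (at r)"
proof -
  assume r: "r > 0"
  have Wp: "W r > 0" using W_pos[OF r] .
  have "(uD has_real_derivative (- a) * W r powr (- a - of_nat 1) * (sqrt (2 * sw (W r)) / a)) (at r)"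
    unfolding uD_def[abs_def] by (rule DERIV_fun_powr[OF W_deriv' Wp])
  moreover have "(- a) * W r powr (- a - of_nat 1) * (sqrt (2 * sw (W r)) / a) = u1D r"
    unfolding u1D_def using a_pos by simp
  ultimately show ?thesis by simp
qed

lemma d_u1D: "r > 0 \<Longrightarrow> (u1D has_real_derivative u2D r) (at r)"
proof -
  assume r: "r > 0"
  have Wp: "W r > 0" using W_pos[OF r] .
  define s where "s = sw (W r)"
  define Q where "Q = sqrt (2 * s)"
  define P where "P = W r powr (- a - 2)"
  define g where "g = gg p M s"
  have sp: "s > 0" unfolding s_def by (rule sw_pos)
  have Qp: "Q > 0" unfolding Q_def using sp by simp
  have QQ: "Q * Q = 2 * s" unfolding Q_def using sp by simp
  have dW: "(W has_real_derivative Q / a) (at r)" unfolding Q_def s_def by (rule W_deriv')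
  have ds: "((\<lambda>r. sw (W r)) has_real_derivative (- a * g / W r) * (Q / a)) (at r)"
    using DERIV_chain2[OF sw_deriv[OF Wp] dW] unfolding g_def s_def by simp
  have dQ: "((\<lambda>r. sqrt (2 * sw (W r))) has_real_derivative (inverse (sqrt (2 * s)) / 2) * (2 * ((- a * g / W r) * (Q / a)))) (at r)"
    using ds sp unfolding s_def by (auto intro!: derivative_eq_intros)
  have dPW: "((\<lambda>r. W r powr (- a - 1)) has_real_derivative (- a - 1) * W r powr (- a - 1 - of_nat 1) * (Q / a)) (at r)"
    by (rule DERIV_fun_powr[OF dW Wp])
  note d = DERIV_minus[OF DERIV_mult[OF dPW dQ]]
  have e1: "W r powr (- a - 1 - of_nat 1) = P" unfolding P_def by (simp add: algebra_simps)
  have e2: "W r powr (- a - 1) = P * W r"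
  proof -
    have "- a - 1 = (- a - 2) + 1" by simp
    then have "W r powr (- a - 1) = W r powr ((- a - 2) + 1)" by (rule arg_cong)
    also have "\<dots> = W r powr (- a - 2) * W r powr 1" by (rule powr_add)
    finally show ?thesis unfolding P_def using Wp by simp
  qed
  have e3: "sqrt (2 * s) = Q" unfolding Q_def ..
  have e4: "sqrt (2 * sw (W r)) = Q" unfolding Q_def s_def ..
  have ea: "(a + 1) / a * 2 = p + 1" unfolding aa_def using p by (simp add: field_simps)
  have "- ((- a - 1) * W r powr (- a - 1 - of_nat 1) * (Q / a) * sqrt (2 * sw (W r)) + inverse (sqrt (2 * s)) / 2 * (2 * (- a * g / W r * (Q / a))) * W r powr (- a - 1))
      = - ((- a - 1) * P * (Q / a) * Q + inverse Q / 2 * (2 * (- a * g / W r * (Q / a))) * (P * W r))"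
    unfolding e1 e2 e3 e4 ..
  also have "\<dots> = ((a + 1) / a) * (Q * Q) * P + g * P"
    using a_pos Wp Qp by (simp add: field_simps)
  also have "((a + 1) / a) * (Q * Q) = (p + 1) * s" unfolding QQ
  proof -
    have "(a + 1) / a * (2 * s) = ((a + 1) / a * 2) * s" by simp
    then show "(a + 1) / a * (2 * s) = (p + 1) * s" unfolding ea .
  qed
  also have "(p + 1) * s * P + g * P = u2D r" unfolding u2D_def s_def[symmetric] g_def[symmetric] P_def[symmetric]
    by (simp add: algebra_simps)
  finally have eqv: "- ((- a - 1) * W r powr (- a - 1 - of_nat 1) * (Q / a) * sqrt (2 * sw (W r)) + inverse (sqrt (2 * s)) / 2 * (2 * (- a * g / W r * (Q / a))) * W r powr (- a - 1)) = u2D r" .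
  have u1e: "u1D = (\<lambda>x. - (W x powr (- a - 1) * sqrt (2 * sw (W x))))" by (rule ext) (simp add: u1D_def)
  show ?thesis unfolding u1e by (rule DERIV_cong[OF d eqv])
qed

lemma u2D_isCont: "r > 0 \<Longrightarrow> isCont u2D r"
proof -
  assume r: "r > 0"
  have Wp: "W r > 0" using W_pos[OF r] .
  have c1: "isCont (\<lambda>r. sw (W r)) r" using continuous_at_compose[OF W_isCont sw_isCont] by (simp add: o_def)
  have c2: "isCont (\<lambda>r. gg p M (sw (W r))) r"
    using continuous_at_compose[OF c1 gg_isCont_pos[OF p sw_pos]] by (simp add: o_def)
  show "isCont u2D r" unfolding u2D_def[abs_def]
    using c1 c2 W_isCont Wp by (auto intro!: continuous_intros)
qed

lemma eqD: "r > 0 \<Longrightarrow> - u2D r = \<bar>uD r\<bar> powr (p-1) * uD r + M * \<bar>u1D r\<bar> powr (2*p/(p+1))"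
proof -
  assume r: "r > 0"
  have Wp: "W r > 0" using W_pos[OF r] .
  define s where "s = sw (W r)"
  have sp: "s > 0" unfolding s_def by (rule sw_pos)
  have e0: "a * p = a + 2" unfolding aa_def using p by (simp add: field_simps)
  have e1: "\<bar>uD r\<bar> powr (p-1) * uD r = W r powr (- a - 2)"
  proof -
    have "\<bar>uD r\<bar> = W r powr (- a)" unfolding uD_def by simp
    then have "\<bar>uD r\<bar> powr (p-1) * uD r = W r powr (- a * (p-1)) * W r powr (- a)"
      unfolding uD_def by (simp add: powr_powr)
    also have "\<dots> = W r powr (- a * (p-1) + - a)" by (rule powr_add[symmetric])
    also have "- a * (p-1) + - a = - a - 2" using e0 by (simp add: algebra_simps)
    finally show ?thesis .
  qed
  have e2: "\<bar>u1D r\<bar> powr (2*p/(p+1)) = (2 * s) powr (p/(p+1)) * W r powr (- a - 2)"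
  proof -
    have ex: "2 * (p/(p+1)) = 2*p/(p+1)" by simp
    have "\<bar>u1D r\<bar> = W r powr (- a - 1) * sqrt (2 * s)" unfolding u1D_def s_def using Wp sw_pos[of "W r"] by (simp add: abs_mult)
    then have "\<bar>u1D r\<bar> powr (2*p/(p+1)) = (W r powr (- a - 1)) powr (2*p/(p+1)) * sqrt (2 * s) powr (2*p/(p+1))"
      using sp by (simp add: powr_mult)
    also have "(W r powr (- a - 1)) powr (2*p/(p+1)) = W r powr (- a - 2)"
    proof -
      have A: "- a - 1 = -(p+1)/(p-1)" unfolding aa_def using p by (simp add: field_simps)
      have B: "- a - 2 = -(2*p)/(p-1)" unfolding aa_def using p by (simp add: field_simps)
      have C0: "\<And>y c z::real. y \<noteq> 0 \<Longrightarrow> c \<noteq> 0 \<Longrightarrow> (- c / y) * (z / c) = - z / y" by (simp add: field_simps)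
      have "(- a - 1) * (2*p/(p+1)) = - a - 2" unfolding A B by (rule C0) (use p in auto)
      then show ?thesis by (simp add: powr_powr)
    qed
    also have "sqrt (2 * s) powr (2*p/(p+1)) = (sqrt (2 * s) powr 2) powr (p/(p+1))"
      unfolding powr_powr ex ..
    also have "sqrt (2 * s) powr 2 = 2 * s" using sp by simp
    finally show ?thesis by simp
  qed
  show ?thesis unfolding e1 e2 u2D_def s_def[symmetric] gg_def by (simp add: algebra_simps)
qed

lemma pos_solution_D: "pos_solution p M uD"
  unfolding pos_solution_def
proof (rule exI[of _ u1D], rule exI[of _ u2D], intro conjI allI impI)
  fix r :: real assume r: "r > 0"
  show "(uD has_real_derivative u1D r) (at r)" by (rule d_uD[OF r])
  show "(u1D has_real_derivative u2D r) (at r)" by (rule d_u1D[OF r])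
  show "uD r > 0" unfolding uD_def using W_pos[OF r] by simp
  show "- u2D r = \<bar>uD r\<bar> powr (p-1) * uD r + M * \<bar>u1D r\<bar> powr (2*p/(p+1))" by (rule eqD[OF r])
next
  show "continuous_on {0<..} u2D" by (rule continuous_at_imp_continuous_on) (auto intro: u2D_isCont)
qed

end


context cD begin

lemma sw0: "sw 0 = S2" unfolding sw_def by simp

lemma uD_asymp0: "uD \<sim>[at_right 0] U1 p M"
proof -
  define c where "c = sqrt (2 * S2) / a"
  have c: "c > 0" unfolding c_def using F1 a_pos by simp
  have d: "(W has_real_derivative c) (at 0)" using W_deriv'[of 0] unfolding c_def W0 sw0 .
  have "((\<lambda>y. (W y - W 0) / (y - 0)) \<longlongrightarrow> c) (at 0)" using d unfolding has_field_derivative_iff .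
  then have "((\<lambda>y. W y / y) \<longlongrightarrow> c) (at 0)" using W0 by simp
  then have lim: "((\<lambda>y. W y / y) \<longlongrightarrow> c) (at_right 0)" by (rule tendsto_mono[OF at_within_le_at])
  have "uD \<sim>[at_right 0] (\<lambda>r. c powr (-a) * r powr (-a))"
  proof (rule asymp_powr[OF a_pos c lim])
    show "eventually (\<lambda>r::real. r > 0) (at_right 0)" by (simp add: eventually_at_filter)
    show "eventually (\<lambda>r. uD r = W r powr (-a)) (at_right 0)" unfolding uD_def by simp
  qed
  moreover have "U1 p M = (\<lambda>r. c powr (-a) * r powr (-a))"
    unfolding U1_def X1_eq[OF p Mle] Phi_def c_def aa_def by (rule ext) simp
  ultimately show ?thesis by simp
qed

lemma W_top: "filterlim W at_top at_top"
proof (rule filterlim_at_top_mono)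
  show "LIM r at_top. (1/cu) * r :> at_top"
    by (rule filterlim_tendsto_pos_mult_at_top[OF tendsto_const _ filterlim_ident]) (use cu_pos in simp)
  show "eventually (\<lambda>r. (1/cu) * r \<le> W r) at_top"
    using W_ge by (intro eventually_at_top_linorderI[of 0]) auto
qed

lemma uD_asympT: "uD \<sim>[at_top] U2 p M"
proof -
  define c where "c = sqrt (2 * S1) / a"
  have c: "c > 0" unfolding c_def using F1 a_pos by simp
  have lim: "((\<lambda>r. W r / r) \<longlongrightarrow> c) at_top"
  proof (rule lhospital_at_top_at_top[where f' = "\<lambda>r. sqrt (2 * sw (W r)) / a" and g' = "\<lambda>r. 1"])
    show "filterlim (\<lambda>x. x) at_top at_top" by (rule filterlim_ident)
    show "eventually (\<lambda>x. (1::real) \<noteq> 0) at_top" by simp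
    show "eventually (\<lambda>x. (W has_real_derivative sqrt (2 * sw (W x)) / a) (at x)) at_top"
      using W_deriv' by simp
    show "eventually (\<lambda>x. ((\<lambda>x. x) has_real_derivative 1) (at x)) at_top" by (auto intro!: derivative_eq_intros)
    have "((\<lambda>r. sw (W r)) \<longlongrightarrow> S1) at_top" by (rule filterlim_compose[OF sw_top W_top])
    then show "((\<lambda>x. sqrt (2 * sw (W x)) / a / 1) \<longlongrightarrow> c) at_top"
      unfolding c_def using a_pos by (auto intro!: tendsto_intros)
  qed
  have "uD \<sim>[at_top] (\<lambda>r. c powr (-a) * r powr (-a))"
  proof (rule asymp_powr[OF a_pos c lim])
    show "eventually (\<lambda>r::real. r > 0) at_top" by (rule eventually_gt_at_top)
    show "eventually (\<lambda>r. uD r = W r powr (-a)) at_top" unfolding uD_def by simp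
  qed
  moreover have "U2 p M = (\<lambda>r. c powr (-a) * r powr (-a))"
    unfolding U2_def X2_eq[OF p Mle] Phi_def c_def aa_def by (rule ext) simp
  ultimately show ?thesis by simp
qed

end


lemma gs_to_gsl:
  assumes p: "p > 1" and g: "ground_state p M u"
  obtains u1 u2 where "gsl p M u u1 u2"
proof -
  obtain u1 u2 where
    d: "\<forall>r\<ge>0. (u has_real_derivative u1 r) (at r within {0..}) \<and> (u1 has_real_derivative u2 r) (at r within {0..})"
    and c: "continuous_on {0..} u2" and z: "u1 0 = 0" and n: "\<forall>r\<ge>0. u r \<ge> 0"
    and t: "\<exists>r\<ge>0. u r \<noteq> 0"
    and e: "\<forall>r>0. - u2 r = \<bar>u r\<bar> powr (p - 1) * u r + M * \<bar>u1 r\<bar> powr (2 * p / (p + 1))"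
    using g unfolding ground_state_def by blast
  have "gsl p M u u1 u2"
  proof (rule gsl.intro)
    show "p > 1" by (rule p)
    show "\<And>r. 0 \<le> r \<Longrightarrow> (u has_real_derivative u1 r) (at r within {0..})" using d by blast
    show "\<And>r. 0 \<le> r \<Longrightarrow> (u1 has_real_derivative u2 r) (at r within {0..})" using d by blast
    show "continuous_on {0..} u2" by (rule c)
    show "u1 0 = 0" by (rule z)
    show "\<And>r. 0 \<le> r \<Longrightarrow> 0 \<le> u r" using n by blast
    show "\<exists>r\<ge>0. u r \<noteq> 0" by (rule t)
    show "\<And>r. 0 < r \<Longrightarrow> - u2 r = \<bar>u r\<bar> powr (p - 1) * u r + M * \<bar>u1 r\<bar> powr (2 * p / (p + 1))" using e by blast
  qed
  then show ?thesis by (rule that)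
qed

lemma gs_le:
  assumes p: "p > 1" and g: "ground_state p M u"
  shows "M \<le> - mu_star1 p"
proof (rule ccontr)
  assume "\<not> M \<le> - mu_star1 p"
  then have M: "M > - mu_star1 p" by simp
  obtain u1 u2 where "gsl p M u u1 u2" using gs_to_gsl[OF p g] .
  then show False using gsl.nonexist[OF _ M] by blast
qed

lemma gs_asymp_main:
  assumes p: "p > 1" and g: "ground_state p M u"
  shows "u \<sim>[at_top] U2 p M"
proof -
  obtain u1 u2 where G: "gsl p M u u1 u2" using gs_to_gsl[OF p g] .
  show ?thesis by (rule gsl.gs_asymp[OF G gs_le[OF p g]])
qed

lemma singular_exists:
  assumes p: "p > 1" and M: "M < - mu_star1 p"
  shows "\<exists>u. pos_solution p M u \<and> u \<sim>[at_right 0] U1 p M \<and> u \<sim>[at_top] U2 p M"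
proof -
  obtain H Rw where D: "cD p M H Rw" using cD_exists[OF p M] by auto
  show ?thesis using cD.pos_solution_D[OF D] cD.uD_asymp0[OF D] cD.uD_asympT[OF D] by blast
qed

theorem theorem4p19:
  fixes p M :: real
  assumes "p > 1"
  shows "((\<exists>u. ground_state p M u) \<longleftrightarrow> M \<le> - mu_star1 p) \<and>
         (\<forall>u. ground_state p M u \<longrightarrow> u \<sim>[at_top] U2 p M) \<and>
         (M < - mu_star1 p \<longrightarrow>
            (\<exists>u. pos_solution p M u \<and> u \<sim>[at_right 0] U1 p M \<and> u \<sim>[at_top] U2 p M))"
proof (intro conjI allI impI iffI)
  show "\<exists>u. ground_state p M u \<Longrightarrow> M \<le> - mu_star1 p" using gs_le[OF assms] by blast
  show "M \<le> - mu_star1 p \<Longrightarrow> \<exists>u. ground_state p M u" by (rule ground_state_exists[OF assms])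
  show "\<And>u. ground_state p M u \<Longrightarrow> u \<sim>[at_top] U2 p M" by (rule gs_asymp_main[OF assms])
  show "M < - mu_star1 p \<Longrightarrow> \<exists>u. pos_solution p M u \<and> u \<sim>[at_right 0] U1 p M \<and> u \<sim>[at_top] U2 p M"
    by (rule singular_exists[OF assms])
qed


end
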